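(* Every generalized Baumslag–Solitar group is extraterrestrial.
   Context: A generalized Baumslag–Solitar group is a group admitting a faithful cocompact action by automorphisms, without edge inversions, on a tree, with all edge and vertex stabilizers infinite cyclic (for instance $\mathrm{BS}(m,n)=\langle a,b\mid ba^mb^{-1}=a^n\rangle$, $m,n\ne0$). A finitely generated group is extraterrestrial if its Cayley graph with respect to some (equivalently any) finite symmetric generating set is extraterrestrial, where a graph $G=(V,E)$ is extraterrestrial if for every $m$ there is $k$ such that for every $r$ there is a triple $(U,F,O)$ of pairwise disjoint finite vertex sets with $U\neq\emptyset$, $|U|\ge m|F|$, a bijection $\mu:U\to O$ with $d_G(u,\mu(u))\le k$, and every path from $U$ to $O$ either contains a vertex of $F$ or has length at least $r$. *)

theory Defs
  imports "HOL-Algebra.Algebra"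
begin

text \<open>A walk in the graph (V,E): a nonempty list of vertices, consecutive ones adjacent.
  Its length (number of edges) is length p - 1.\<close>
definition graph_walk :: "'v set \<Rightarrow> ('v \<times> 'v) set \<Rightarrow> 'v list \<Rightarrow> bool" where
  "graph_walk V E p \<longleftrightarrow> p \<noteq> [] \<and> set p \<subseteq> V \<and>
     (\<forall>i. Suc i < length p \<longrightarrow> (p ! i, p ! Suc i) \<in> E)"

definition graph_dist_le :: "'v set \<Rightarrow> ('v \<times> 'v) set \<Rightarrow> 'v \<Rightarrow> 'v \<Rightarrow> nat \<Rightarrow> bool" where
  "graph_dist_le V E u v k \<longleftrightarrow>
     (\<exists>p. graph_walk V E p \<and> hd p = u \<and> last p = v \<and> length p - 1 \<le> k)"

definition extraterrestrial_graph :: "'v set \<Rightarrow> ('v \<times> 'v) set \<Rightarrow> bool" where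
  "extraterrestrial_graph V E \<longleftrightarrow>
    (\<forall>m::nat. \<exists>k::nat. \<forall>r::nat. \<exists>U F W (\<mu>::'v \<Rightarrow> 'v).
       U \<subseteq> V \<and> F \<subseteq> V \<and> W \<subseteq> V \<and> finite U \<and> finite F \<and> finite W \<and>
       U \<inter> F = {} \<and> U \<inter> W = {} \<and> F \<inter> W = {} \<and>
       U \<noteq> {} \<and> card U \<ge> m * card F \<and>
       bij_betw \<mu> U W \<and> (\<forall>u\<in>U. graph_dist_le V E u (\<mu> u) k) \<and>
       (\<forall>p. graph_walk V E p \<and> hd p \<in> U \<and> last p \<in> W \<longrightarrow>
            set p \<inter> F \<noteq> {} \<or> length p - 1 \<ge> r))"

definition is_tree :: "'v set \<Rightarrow> ('v \<times> 'v) set \<Rightarrow> bool" where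
  "is_tree V E \<longleftrightarrow> V \<noteq> {} \<and> E \<subseteq> V \<times> V \<and> sym E \<and> irrefl E \<and>
     (\<forall>u\<in>V. \<forall>v\<in>V. \<exists>p. graph_walk V E p \<and> hd p = u \<and> last p = v) \<and>
     \<not> (\<exists>p. graph_walk V E p \<and> length p \<ge> 3 \<and> distinct p \<and> (last p, hd p) \<in> E)"

definition cayley_edges :: "('g, 'b) monoid_scheme \<Rightarrow> 'g set \<Rightarrow> ('g \<times> 'g) set" where
  "cayley_edges G S = {(g, g \<otimes>\<^bsub>G\<^esub> s) | g s. g \<in> carrier G \<and> s \<in> S}"

definition finite_symmetric_generating_set :: "('g, 'b) monoid_scheme \<Rightarrow> 'g set \<Rightarrow> bool" where
  "finite_symmetric_generating_set G S \<longleftrightarrow> S \<subseteq> carrier G \<and> finite S \<and>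
     (\<forall>s\<in>S. inv\<^bsub>G\<^esub> s \<in> S) \<and> generate G S = carrier G"

definition extraterrestrial_group :: "('g, 'b) monoid_scheme \<Rightarrow> bool" where
  "extraterrestrial_group G \<longleftrightarrow>
     (\<exists>S. finite_symmetric_generating_set G S \<and>
          extraterrestrial_graph (carrier G) (cayley_edges G S))"

definition infinite_cyclic_subgroup :: "('g, 'b) monoid_scheme \<Rightarrow> 'g set \<Rightarrow> bool" where
  "infinite_cyclic_subgroup G H \<longleftrightarrow> infinite H \<and>
     (\<exists>a\<in>carrier G. H = {a [^]\<^bsub>G\<^esub> (k::int) | k. True})"

definition tree_action :: "('g, 'b) monoid_scheme \<Rightarrow> 'v set \<Rightarrow> ('v \<times> 'v) set \<Rightarrow> ('g \<Rightarrow> 'v \<Rightarrow> 'v) \<Rightarrow> bool" where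
  "tree_action G V E act \<longleftrightarrow>
     (\<forall>g\<in>carrier G. bij_betw (act g) V V \<and>
        (\<forall>u\<in>V. \<forall>v\<in>V. (u, v) \<in> E \<longleftrightarrow> (act g u, act g v) \<in> E)) \<and>
     (\<forall>v\<in>V. act \<one>\<^bsub>G\<^esub> v = v) \<and>
     (\<forall>g\<in>carrier G. \<forall>h\<in>carrier G. \<forall>v\<in>V. act (g \<otimes>\<^bsub>G\<^esub> h) v = act g (act h v))"

definition vertex_stabilizer :: "('g, 'b) monoid_scheme \<Rightarrow> ('g \<Rightarrow> 'v \<Rightarrow> 'v) \<Rightarrow> 'v \<Rightarrow> 'g set" where
  "vertex_stabilizer G act v = {g \<in> carrier G. act g v = v}"

definition edge_stabilizer :: "('g, 'b) monoid_scheme \<Rightarrow> ('g \<Rightarrow> 'v \<Rightarrow> 'v) \<Rightarrow> 'v \<times> 'v \<Rightarrow> 'g set" where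
  "edge_stabilizer G act e = {g \<in> carrier G. act g (fst e) = fst e \<and> act g (snd e) = snd e}"

definition GBS_action :: "('g, 'b) monoid_scheme \<Rightarrow> 'v set \<Rightarrow> ('v \<times> 'v) set \<Rightarrow> ('g \<Rightarrow> 'v \<Rightarrow> 'v) \<Rightarrow> bool" where
  "GBS_action G V E act \<longleftrightarrow>
     is_tree V E \<and> tree_action G V E act \<and>
     \<comment> \<open>faithful\<close>
     (\<forall>g\<in>carrier G. (\<forall>v\<in>V. act g v = v) \<longrightarrow> g = \<one>\<^bsub>G\<^esub>) \<and>
     \<comment> \<open>cocompact: finitely many orbits of vertices and of edges\<close>
     (\<exists>FV. finite FV \<and> FV \<subseteq> V \<and> V = {act g v | g v. g \<in> carrier G \<and> v \<in> FV}) \<and>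
     (\<exists>FE. finite FE \<and> FE \<subseteq> E \<and>
        E = {(act g u, act g v) | g u v. g \<in> carrier G \<and> (u, v) \<in> FE}) \<and>
     \<comment> \<open>no edge inversions\<close>
     (\<forall>g\<in>carrier G. \<forall>(u, v)\<in>E. \<not> (act g u = v \<and> act g v = u)) \<and>
     (\<forall>v\<in>V. infinite_cyclic_subgroup G (vertex_stabilizer G act v)) \<and>
     (\<forall>e\<in>E. infinite_cyclic_subgroup G (edge_stabilizer G act e))"

end

theory Submission
  imports Defs
begin


lemma walk_Nil[simp]: "\<not> graph_walk V E []"
  by (simp add: graph_walk_def)

lemma walk_single[simp]: "graph_walk V E [x] \<longleftrightarrow> x \<in> V"
  by (simp add: graph_walk_def)

lemma walk_Cons2[simp]:
  "graph_walk V E (x # y # p) \<longleftrightarrow> x \<in> V \<and> (x, y) \<in> E \<and> graph_walk V E (y # p)"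
proof
  assume h: "graph_walk V E (x # y # p)"
  then show "x \<in> V \<and> (x, y) \<in> E \<and> graph_walk V E (y # p)"
    unfolding graph_walk_def
    apply (intro conjI)
      apply simp
     apply (metis Suc_less_eq length_Cons nth_Cons_0 nth_Cons_Suc zero_less_Suc)
    by auto
next
  assume h: "x \<in> V \<and> (x, y) \<in> E \<and> graph_walk V E (y # p)"
  show "graph_walk V E (x # y # p)"
    unfolding graph_walk_def
  proof (intro conjI allI impI)
    show "set (x # y # p) \<subseteq> V" using h by (auto simp: graph_walk_def)
    fix i assume "Suc i < length (x # y # p)"
    then show "((x # y # p) ! i, (x # y # p) ! Suc i) \<in> E"
      using h by (cases i) (auto simp: graph_walk_def)
  qed simp
qed

lemma walk_ConsE: "graph_walk V E (x # p) \<Longrightarrow> p \<noteq> [] \<Longrightarrow> graph_walk V E p \<and> (x, hd p) \<in> E \<and> x \<in> V"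
  by (cases p) auto

lemma walk_Cons_iff: "graph_walk V E (x # p) \<longleftrightarrow> x \<in> V \<and> (p = [] \<or> (graph_walk V E p \<and> (x, hd p) \<in> E))"
  by (cases p) auto

lemma walk_append_iff:
  assumes "xs \<noteq> []" "ys \<noteq> []"
  shows "graph_walk V E (xs @ ys) \<longleftrightarrow> graph_walk V E xs \<and> graph_walk V E ys \<and> (last xs, hd ys) \<in> E"
  using assms
proof (induction xs)
  case Nil then show ?case by simp
next
  case (Cons x xs)
  show ?case
  proof (cases "xs = []")
    case True
    then show ?thesis using Cons.prems by (cases ys) auto
  next
    case False
    then show ?thesis using Cons by (cases xs) auto
  qed
qed

lemma walk_append_shared:
  assumes "graph_walk V E p" "graph_walk V E q" "last p = hd q"
  shows "graph_walk V E (p @ tl q)"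
proof (cases "tl q = []")
  case True then show ?thesis using assms by simp
next
  case False
  have "q = hd q # tl q" using assms(2) by (cases q) auto
  then have "graph_walk V E (tl q)" "(hd q, hd (tl q)) \<in> E"
    using assms(2) False walk_ConsE[of V E "hd q" "tl q"] by metis+
  then show ?thesis using assms False by (subst walk_append_iff) auto
qed

lemma walk_hd_last_append_shared:
  assumes "graph_walk V E p" "graph_walk V E q" "last p = hd q"
  shows "hd (p @ tl q) = hd p" "last (p @ tl q) = last q" "set (p @ tl q) \<subseteq> set p \<union> set q"
    "length (p @ tl q) = length p + length q - 1"
proof -
  have "p \<noteq> []" "q \<noteq> []" using assms by auto
  then show "hd (p @ tl q) = hd p" by simp
  show "last (p @ tl q) = last q" using assms \<open>q \<noteq> []\<close> \<open>p \<noteq> []\<close>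
    by (cases q) auto
  show "set (p @ tl q) \<subseteq> set p \<union> set q" using \<open>q \<noteq> []\<close> by (cases q) auto
  show "length (p @ tl q) = length p + length q - 1" using \<open>q \<noteq> []\<close> by (cases q) auto
qed

lemma walk_rev:
  assumes "sym E" "graph_walk V E p" shows "graph_walk V E (rev p)"
  using assms(2)
proof (induction p)
  case Nil then show ?case by simp
next
  case (Cons x p)
  show ?case
  proof (cases "p = []")
    case True then show ?thesis using Cons by simp
  next
    case False
    then have "graph_walk V E p" "(x, hd p) \<in> E" "x \<in> V" using walk_ConsE Cons.prems by metis+
    then have "(hd p, x) \<in> E" using assms(1) by (meson symD)
    moreover have "last (rev p) = hd p" using False by (simp add: last_rev)
    ultimately show ?thesis using Cons.IH \<open>graph_walk V E p\<close> False \<open>x \<in> V\<close>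
      by (subst rev.simps, subst walk_append_iff) auto
  qed
qed

lemma walk_map:
  assumes "\<forall>v\<in>V. f v \<in> V" "\<forall>u\<in>V. \<forall>v\<in>V. (u, v) \<in> E \<longrightarrow> (f u, f v) \<in> E"
    "graph_walk V E p"
  shows "graph_walk V E (map f p)"
  using assms(3)
proof (induction p)
  case Nil then show ?case by simp
next
  case (Cons x p)
  then show ?case using assms(1,2)
    by (cases p) (auto simp: walk_Cons_iff)
qed

lemma walk_take: "graph_walk V E p \<Longrightarrow> 0 < n \<Longrightarrow> graph_walk V E (take n p)"
  unfolding graph_walk_def
  by (auto dest: in_set_takeD)

lemma walk_drop: "graph_walk V E p \<Longrightarrow> n < length p \<Longrightarrow> graph_walk V E (drop n p)"
  unfolding graph_walk_def
  by (auto dest: in_set_dropD)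

lemma walk_edges: "graph_walk V E p \<Longrightarrow> set p \<subseteq> V"
  by (simp add: graph_walk_def)

lemma walk_prop:
  assumes "graph_walk V E p" "P (hd p)" "\<And>v w. v \<in> V \<Longrightarrow> P v \<Longrightarrow> (v, w) \<in> E \<Longrightarrow> P w"
  shows "\<forall>x\<in>set p. P x"
  using assms(1,2)
proof (induction p)
  case Nil then show ?case by simp
next
  case (Cons x p)
  show ?case
  proof (cases "p = []")
    case True then show ?thesis using Cons by simp
  next
    case False
    then have "graph_walk V E p" "(x, hd p) \<in> E" "x \<in> V" using walk_ConsE Cons.prems by metis+
    then have "P (hd p)" using assms(3) Cons.prems by auto
    then show ?thesis using Cons.IH \<open>graph_walk V E p\<close> Cons.prems by auto
  qed
qed

lemma walk_distinct:
  assumes "graph_walk V E p"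
  shows "\<exists>q. graph_walk V E q \<and> distinct q \<and> hd q = hd p \<and> last q = last p \<and> set q \<subseteq> set p
            \<and> length q \<le> length p"
  using assms
proof (induction "length p" arbitrary: p rule: less_induct)
  case less
  show ?case
  proof (cases "distinct p")
    case True then show ?thesis using less.prems by blast
  next
    case False
    then obtain ys zs us a where p: "p = ys @ [a] @ zs @ [a] @ us"
      using not_distinct_decomp by blast
    define p' where "p' = ys @ [a] @ us"
    have w1: "graph_walk V E (ys @ [a])"
    proof (cases "ys = []")
      case True then show ?thesis using less.prems p by (auto simp: graph_walk_def)
    next
      case False
      then show ?thesis using less.prems p walk_append_iff[of "ys @ [a]" "zs @ [a] @ us" V E] by simp
    qed
    have w2: "graph_walk V E ([a] @ us)"
      using less.prems p walk_append_iff[of "ys @ [a] @ zs" "[a] @ us" V E] by simp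
    have wp': "graph_walk V E p'"
      unfolding p'_def using walk_append_shared[OF w1 w2] by simp
    have "length p' < length p" unfolding p'_def p by simp
    then obtain q where q: "graph_walk V E q \<and> distinct q \<and> hd q = hd p' \<and> last q = last p' \<and> set q \<subseteq> set p'
            \<and> length q \<le> length p'" using less.hyps wp' by blast
    moreover have "hd p' = hd p" "last p' = last p" "set p' \<subseteq> set p"
      unfolding p'_def p by (cases ys; auto)+
    ultimately show ?thesis using \<open>length p' < length p\<close> by (metis dual_order.trans less_imp_le)
  qed
qed


lemma dist_refl: "x \<in> V \<Longrightarrow> graph_dist_le V E x x 0"
  unfolding graph_dist_le_def by (rule exI[of _ "[x]"]) simp

lemma dist_mono: "graph_dist_le V E x y d \<Longrightarrow> d \<le> d' \<Longrightarrow> graph_dist_le V E x y d'"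
  unfolding graph_dist_le_def by auto

lemma dist_sym: "sym E \<Longrightarrow> graph_dist_le V E x y d \<Longrightarrow> graph_dist_le V E y x d"
  unfolding graph_dist_le_def
proof (elim exE conjE)
  fix p assume "sym E" "graph_walk V E p" "hd p = x" "last p = y" "length p - 1 \<le> d"
  then show "\<exists>p. graph_walk V E p \<and> hd p = y \<and> last p = x \<and> length p - 1 \<le> d"
    by (intro exI[of _ "rev p"]) (simp add: walk_rev hd_rev last_rev)
qed

lemma dist_trans: "graph_dist_le V E x y d1 \<Longrightarrow> graph_dist_le V E y z d2 \<Longrightarrow> graph_dist_le V E x z (d1 + d2)"
  unfolding graph_dist_le_def
proof (elim exE conjE)
  fix p q assume h: "graph_walk V E p" "hd p = x" "last p = y" "length p - 1 \<le> d1"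
    "graph_walk V E q" "hd q = y" "last q = z" "length q - 1 \<le> d2"
  then show "\<exists>p. graph_walk V E p \<and> hd p = x \<and> last p = z \<and> length p - 1 \<le> d1 + d2"
    using walk_append_shared[of V E p q] walk_hd_last_append_shared[of V E p q]
    by (intro exI[of _ "p @ tl q"]) auto
qed

lemma dist_edge: "x \<in> V \<Longrightarrow> y \<in> V \<Longrightarrow> (x, y) \<in> E \<Longrightarrow> graph_dist_le V E x y 1"
  unfolding graph_dist_le_def by (rule exI[of _ "[x,y]"]) simp

lemma dist_in_V: "graph_dist_le V E x y d \<Longrightarrow> x \<in> V \<and> y \<in> V"
  unfolding graph_dist_le_def graph_walk_def using hd_in_set last_in_set by blast

lemma dist_map:
  assumes "\<forall>v\<in>V. f v \<in> V" "\<forall>u\<in>V. \<forall>v\<in>V. (u, v) \<in> E \<longrightarrow> (f u, f v) \<in> E"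
    "graph_dist_le V E x y d"
  shows "graph_dist_le V E (f x) (f y) d"
  using assms(3) unfolding graph_dist_le_def
proof (elim exE conjE)
  fix p assume "graph_walk V E p" "hd p = x" "last p = y" "length p - 1 \<le> d"
  moreover then have "p \<noteq> []" by auto
  ultimately show "\<exists>p. graph_walk V E p \<and> hd p = f x \<and> last p = f y \<and> length p - 1 \<le> d"
    using walk_map[OF assms(1,2)] by (intro exI[of _ "map f p"]) (simp add: hd_map last_map)
qed

lemma walk_prefix_dist:
  assumes "graph_walk V E p" "i < length p"
  shows "graph_dist_le V E (hd p) (p ! i) i"
  unfolding graph_dist_le_def
proof (intro exI[of _ "take (Suc i) p"] conjI)
  show "graph_walk V E (take (Suc i) p)" using walk_take assms by blast
  show "hd (take (Suc i) p) = hd p" using assms by (cases p) auto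
  show "last (take (Suc i) p) = p ! i" using assms by (simp add: take_Suc_conv_app_nth)
  show "length (take (Suc i) p) - 1 \<le> i" by simp
qed

lemma walk_mem_dist:
  assumes "graph_walk V E p" "x \<in> set p" "length p - 1 \<le> r"
  shows "graph_dist_le V E (hd p) x r"
proof -
  obtain i where "i < length p" "p ! i = x" using assms(2) by (metis in_set_conv_nth)
  then show ?thesis using walk_prefix_dist[OF assms(1)] assms(3) dist_mono by fastforce
qed

lemma walk_from_dist_le:
  "graph_dist_le V E x y d \<Longrightarrow> \<exists>p. graph_walk V E p \<and> hd p = x \<and> last p = y \<and> length p \<le> Suc d"
  unfolding graph_dist_le_def by auto


lemma (in group) inf_cyc_order:
  assumes a: "a \<in> carrier G" and inf: "infinite {a [^] (k::int) | k. True}" and k: "a [^] (k::int) = \<one>"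
  shows "k = 0"
proof (rule ccontr)
  assume "k \<noteq> 0"
  define n where "n = \<bar>k\<bar>"
  have n0: "n > 0" using \<open>k \<noteq> 0\<close> n_def by simp
  have an: "a [^] n = \<one>"
  proof (cases "k \<ge> 0")
    case True then show ?thesis using k n_def by simp
  next
    case False
    then have "n = - k" using n_def by simp
    then show ?thesis using k a int_pow_neg[OF a, of k] by simp
  qed
  have "{a [^] (k::int) | k. True} \<subseteq> (\<lambda>j. a [^] j) ` {0..<n}"
  proof
    fix x assume "x \<in> {a [^] (k::int) | k. True}"
    then obtain i where i: "x = a [^] (i::int)" by blast
    have "i = n * (i div n) + i mod n" by simp
    then have "a [^] i = a [^] (n * (i div n)) \<otimes> a [^] (i mod n)"
      using int_pow_mult[OF a] by metis
    also have "a [^] (n * (i div n)) = \<one>"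
      using int_pow_pow[OF a, of n "i div n"] an by simp
    finally have "a [^] i = a [^] (i mod n)" using a by simp
    moreover have "i mod n \<in> {0..<n}" using n0 by simp
    ultimately show "x \<in> (\<lambda>j. a [^] j) ` {0..<n}" using i by blast
  qed
  then have "finite {a [^] (k::int) | k. True}"
    by (meson finite_atLeastLessThan_int finite_imageI finite_subset)
  then show False using inf by simp
qed

lemma (in group) inf_cyc_inj:
  assumes a: "a \<in> carrier G" and inf: "infinite {a [^] (k::int) | k. True}" and k: "a [^] (i::int) = a [^] (j::int)"
  shows "i = j"
proof -
  have "a [^] (i - j) = a [^] i \<otimes> inv (a [^] j)" using int_pow_diff[OF a] by simp
  also have "\<dots> = \<one>" using k a by simp
  finally show ?thesis using inf_cyc_order[OF a inf] by fastforce
qed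

locale gbs =
  fixes G :: "('g, 'b) monoid_scheme" (structure) and V :: "'v set" and E :: "('v \<times> 'v) set"
    and act :: "'g \<Rightarrow> 'v \<Rightarrow> 'v"
  assumes grp: "group G" and gbsa: "GBS_action G V E act"
begin

sublocale group G by (rule grp)

lemma tree: "is_tree V E" using gbsa by (simp add: GBS_action_def)
lemma symE: "sym E" using tree by (simp add: is_tree_def)
lemma irreflE: "irrefl E" using tree by (simp add: is_tree_def)
lemma E_sub: "E \<subseteq> V \<times> V" using tree by (simp add: is_tree_def)
lemma V_ne: "V \<noteq> {}" using tree by (simp add: is_tree_def)
lemma E_V: "(u, v) \<in> E \<Longrightarrow> u \<in> V \<and> v \<in> V" using E_sub by auto
lemma E_sym: "(u, v) \<in> E \<Longrightarrow> (v, u) \<in> E" using symE by (meson symD)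
lemma E_irr: "(u, v) \<in> E \<Longrightarrow> u \<noteq> v" using irreflE by (metis irrefl_def)
lemma conn: "u \<in> V \<Longrightarrow> v \<in> V \<Longrightarrow> \<exists>p. graph_walk V E p \<and> hd p = u \<and> last p = v"
  using tree by (simp add: is_tree_def)
lemma conn_dist: "u \<in> V \<Longrightarrow> v \<in> V \<Longrightarrow> \<exists>d. graph_dist_le V E u v d"
  using conn unfolding graph_dist_le_def by blast
lemma nocycle: "graph_walk V E p \<Longrightarrow> length p \<ge> 3 \<Longrightarrow> distinct p \<Longrightarrow> (last p, hd p) \<in> E \<Longrightarrow> False"
  using tree by (auto simp: is_tree_def)

lemma tact: "tree_action G V E act" using gbsa by (simp add: GBS_action_def)

lemma act_V: "g \<in> carrier G \<Longrightarrow> v \<in> V \<Longrightarrow> act g v \<in> V"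
  using tact unfolding tree_action_def by (meson bij_betwE)
lemma act_E: "g \<in> carrier G \<Longrightarrow> u \<in> V \<Longrightarrow> v \<in> V \<Longrightarrow> (act g u, act g v) \<in> E \<longleftrightarrow> (u, v) \<in> E"
  using tact unfolding tree_action_def by blast
lemma act_one: "v \<in> V \<Longrightarrow> act \<one> v = v"
  using tact unfolding tree_action_def by blast
lemma act_mult: "g \<in> carrier G \<Longrightarrow> h \<in> carrier G \<Longrightarrow> v \<in> V \<Longrightarrow> act (g \<otimes> h) v = act g (act h v)"
  using tact unfolding tree_action_def by blast
lemma act_inv1: "g \<in> carrier G \<Longrightarrow> v \<in> V \<Longrightarrow> act (inv g) (act g v) = v"
  by (metis act_mult act_one inv_closed l_inv)
lemma act_inv2: "g \<in> carrier G \<Longrightarrow> v \<in> V \<Longrightarrow> act g (act (inv g) v) = v"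
  by (metis act_mult act_one inv_closed r_inv)
lemma act_inj: "g \<in> carrier G \<Longrightarrow> u \<in> V \<Longrightarrow> v \<in> V \<Longrightarrow> act g u = act g v \<Longrightarrow> u = v"
  by (metis act_inv1)
lemma act_E': "g \<in> carrier G \<Longrightarrow> (u, v) \<in> E \<Longrightarrow> (act g u, act g v) \<in> E"
  using act_E E_V by blast

lemma act_walk: "g \<in> carrier G \<Longrightarrow> graph_walk V E p \<Longrightarrow> graph_walk V E (map (act g) p)"
  by (rule walk_map) (auto simp: act_V act_E)

lemma act_dist: "g \<in> carrier G \<Longrightarrow> graph_dist_le V E x y d \<Longrightarrow> graph_dist_le V E (act g x) (act g y) d"
  by (rule dist_map) (auto simp: act_V act_E)

lemma act_dist_iff: "g \<in> carrier G \<Longrightarrow> x \<in> V \<Longrightarrow> y \<in> V \<Longrightarrow>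
    graph_dist_le V E (act g x) (act g y) d \<longleftrightarrow> graph_dist_le V E x y d"
  by (metis act_dist act_inv1 inv_closed)

lemma faithful: "g \<in> carrier G \<Longrightarrow> (\<forall>v\<in>V. act g v = v) \<Longrightarrow> g = \<one>"
  using gbsa by (simp add: GBS_action_def)

lemma cocompV: "\<exists>FV. finite FV \<and> FV \<subseteq> V \<and> V = {act g v | g v. g \<in> carrier G \<and> v \<in> FV}"
  using gbsa by (simp add: GBS_action_def)
lemma cocompE: "\<exists>FE. finite FE \<and> FE \<subseteq> E \<and> E = {(act g u, act g v) | g u v. g \<in> carrier G \<and> (u, v) \<in> FE}"
  using gbsa by (simp add: GBS_action_def)

lemma stab_cyc: "v \<in> V \<Longrightarrow> infinite_cyclic_subgroup G (vertex_stabilizer G act v)"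
  using gbsa by (simp add: GBS_action_def)
lemma estab_cyc: "e \<in> E \<Longrightarrow> infinite_cyclic_subgroup G (edge_stabilizer G act e)"
  using gbsa by (simp add: GBS_action_def)

definition gen :: "'v \<Rightarrow> 'g" where
  "gen v = (SOME a. a \<in> carrier G \<and> vertex_stabilizer G act v = {a [^] (k::int) | k. True})"

lemma gen:
  assumes "v \<in> V"
  shows "gen v \<in> carrier G" "vertex_stabilizer G act v = {gen v [^] (k::int) | k. True}"
    "infinite {gen v [^] (k::int) | k. True}"
proof -
  have "\<exists>a. a \<in> carrier G \<and> vertex_stabilizer G act v = {a [^] (k::int) | k. True}"
    using stab_cyc[OF assms] unfolding infinite_cyclic_subgroup_def by blast
  then have h: "gen v \<in> carrier G \<and> vertex_stabilizer G act v = {gen v [^] (k::int) | k. True}"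
    unfolding gen_def by (rule someI_ex)
  then show "gen v \<in> carrier G" "vertex_stabilizer G act v = {gen v [^] (k::int) | k. True}" by auto
  show "infinite {gen v [^] (k::int) | k. True}"
    using h stab_cyc[OF assms] unfolding infinite_cyclic_subgroup_def by auto
qed

lemma gen_order: "v \<in> V \<Longrightarrow> gen v [^] (k::int) = \<one> \<Longrightarrow> k = 0"
  using inf_cyc_order gen by blast

lemma gen_inj: "v \<in> V \<Longrightarrow> gen v [^] (i::int) = gen v [^] (j::int) \<Longrightarrow> i = j"
  using inf_cyc_inj gen by blast

lemma gen_fix: "v \<in> V \<Longrightarrow> act (gen v [^] (k::int)) v = v"
proof -
  assume v: "v \<in> V"
  have "gen v [^] k \<in> vertex_stabilizer G act v" using gen[OF v] by blast
  then show ?thesis by (simp add: vertex_stabilizer_def)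
qed

lemma stab_elem: "v \<in> V \<Longrightarrow> g \<in> carrier G \<Longrightarrow> act g v = v \<Longrightarrow> \<exists>k::int. g = gen v [^] k"
proof -
  assume v: "v \<in> V" and g: "g \<in> carrier G" "act g v = v"
  then have "g \<in> vertex_stabilizer G act v" by (simp add: vertex_stabilizer_def)
  then show ?thesis using gen[OF v] by blast
qed

lemma edge_fix: "(u, v) \<in> E \<Longrightarrow> \<exists>g\<in>carrier G. g \<noteq> \<one> \<and> act g u = u \<and> act g v = v"
proof -
  assume e: "(u, v) \<in> E"
  have inf: "infinite (edge_stabilizer G act (u, v))"
    using estab_cyc[OF e] unfolding infinite_cyclic_subgroup_def by blast
  then obtain g where "g \<in> edge_stabilizer G act (u, v)" "g \<noteq> \<one>"
    by (metis ex_in_conv finite.emptyI finite_insert insert_iff subsetI finite_subset[of _ "{\<one>}"])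
  then show ?thesis by (auto simp: edge_stabilizer_def)
qed

end


context gbs begin

lemma nbr_sep:
  assumes "(x, n1) \<in> E" "(x, n2) \<in> E" "n1 \<noteq> n2" "graph_walk V E p" "hd p = n1" "last p = n2"
    "x \<notin> set p"
  shows False
proof -
  obtain q where q: "graph_walk V E q" "distinct q" "hd q = n1" "last q = n2" "set q \<subseteq> set p"
    using walk_distinct[OF assms(4)] assms(5,6) by blast
  have xq: "x \<notin> set q" using q(5) assms(7) by blast
  have qne: "q \<noteq> []" using q(1) by auto
  have "length q \<ge> 2"
  proof (cases q)
    case Nil then show ?thesis using qne by simp
  next
    case (Cons a l) 
    have "l \<noteq> []" using Cons q(3,4) assms(3) by auto
    then show ?thesis using Cons by (cases l) auto
  qed
  have xV: "x \<in> V" using E_V assms(1) by blast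
  have w: "graph_walk V E (x # q)"
    using q(1,3) qne assms(1) xV by (simp add: walk_Cons_iff)
  show False
  proof (rule nocycle[OF w])
    show "3 \<le> length (x # q)" using \<open>length q \<ge> 2\<close> by simp
    show "distinct (x # q)" using q(2) xq by simp
    show "(last (x # q), hd (x # q)) \<in> E" using qne q(4) assms(2) E_sym by simp
  qed
qed

definition br :: "'v \<Rightarrow> 'v \<Rightarrow> 'v set" where
  "br x n = {w. \<exists>p. graph_walk V E p \<and> hd p = n \<and> last p = w \<and> x \<notin> set p}"

lemma br_sep:
  assumes "(x, n1) \<in> E" "(x, n2) \<in> E" "n1 \<noteq> n2" "w1 \<in> br x n1" "w2 \<in> br x n2"
    "graph_walk V E q" "hd q = w1" "last q = w2"
  shows "x \<in> set q"
proof (rule ccontr)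
  assume xq: "x \<notin> set q"
  obtain p1 where p1: "graph_walk V E p1" "hd p1 = n1" "last p1 = w1" "x \<notin> set p1"
    using assms(4) unfolding br_def by blast
  obtain p2 where p2: "graph_walk V E p2" "hd p2 = n2" "last p2 = w2" "x \<notin> set p2"
    using assms(5) unfolding br_def by blast
  have r2: "graph_walk V E (rev p2)" "hd (rev p2) = w2" "last (rev p2) = n2" "x \<notin> set (rev p2)"
    using p2 walk_rev[OF symE] by (auto simp: hd_rev last_rev)
  define p3 where "p3 = p1 @ tl q"
  have w3: "graph_walk V E p3" "hd p3 = n1" "last p3 = w2" "set p3 \<subseteq> set p1 \<union> set q"
    unfolding p3_def using walk_append_shared[OF p1(1) assms(6)] walk_hd_last_append_shared[OF p1(1) assms(6)]
      p1 assms(7,8) by auto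
  define p4 where "p4 = p3 @ tl (rev p2)"
  have w4: "graph_walk V E p4" "hd p4 = n1" "last p4 = n2" "set p4 \<subseteq> set p3 \<union> set (rev p2)"
    unfolding p4_def using walk_append_shared[OF w3(1) r2(1)] walk_hd_last_append_shared[OF w3(1) r2(1)]
      w3 r2 by auto
  have "x \<notin> set p4" using w4(4) w3(4) xq p1(4) r2(4) by blast
  then show False using nbr_sep[OF assms(1,2,3) w4(1,2,3)] by blast
qed

lemma br_act:
  assumes g: "g \<in> carrier G" and x: "x \<in> V" and w: "w \<in> br x n"
  shows "act g w \<in> br (act g x) (act g n)"
proof -
  obtain p where p: "graph_walk V E p" "hd p = n" "last p = w" "x \<notin> set p"
    using w unfolding br_def by blast
  have "act g x \<notin> set (map (act g) p)"
  proof
    assume "act g x \<in> set (map (act g) p)"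
    then obtain y where "y \<in> set p" "act g y = act g x" by auto
    then have "y = x" using act_inj[OF g] p(1) x walk_edges by blast
    then show False using p(4) \<open>y \<in> set p\<close> by simp
  qed
  moreover have "p \<noteq> []" using p(1) by auto
  ultimately show ?thesis unfolding br_def using act_walk[OF g p(1)] p
    by (intro CollectI exI[of _ "map (act g) p"]) (simp add: hd_map last_map)
qed

lemma br_V: "w \<in> br x n \<Longrightarrow> w \<in> V"
proof -
  assume "w \<in> br x n"
  then obtain p where p: "graph_walk V E p" "last p = w" unfolding br_def by blast
  then have "p \<noteq> []" by auto
  then have "w \<in> set p" using p(2) last_in_set by blast
  then show ?thesis using walk_edges[OF p(1)] by blast
qed

lemma fix_pow:
  assumes v: "v \<in> V" and g: "g \<in> carrier G" and f: "act g v = v"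
  shows "act (g [^] (t::int)) v = v"
proof -
  obtain j :: int where j: "g = gen v [^] j" using stab_elem[OF v g f] by blast
  then have "g [^] t = gen v [^] (j * t)" using int_pow_pow[OF gen(1)[OF v], of j t] by simp
  then show ?thesis using gen_fix[OF v] by simp
qed

lemma common_fix:
  assumes u: "u \<in> V" and v: "v \<in> V"
  shows "\<exists>z\<in>carrier G. z \<noteq> \<one> \<and> act z u = u \<and> act z v = v"
proof -
  obtain p where p: "graph_walk V E p" "hd p = u" "last p = v" using conn[OF u v] by blast
  have "\<forall>w\<in>set p. \<exists>z\<in>carrier G. z \<noteq> \<one> \<and> act z u = u \<and> act z w = w"
  proof (rule walk_prop[OF p(1)])
    show "\<exists>z\<in>carrier G. z \<noteq> \<one> \<and> act z u = u \<and> act z (hd p) = hd p"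
    proof (intro bexI conjI)
      show "gen u \<noteq> \<one>"
      proof
        assume "gen u = \<one>"
        then have "gen u [^] (1::int) = \<one>" using gen(1)[OF u] by simp
        then show False using gen_order[OF u] by fastforce
      qed
      show "act (gen u) u = u" using gen_fix[OF u, of 1] gen(1)[OF u] by simp
      then show "act (gen u) (hd p) = hd p" using p(2) by simp
    qed (rule gen(1)[OF u])
  next
    fix w w' assume w: "w \<in> V" and h: "\<exists>z\<in>carrier G. z \<noteq> \<one> \<and> act z u = u \<and> act z w = w"
      and e: "(w, w') \<in> E"
    obtain z where z: "z \<in> carrier G" "z \<noteq> \<one>" "act z u = u" "act z w = w" using h by blast
    obtain f where f: "f \<in> carrier G" "f \<noteq> \<one>" "act f w = w" "act f w' = w'" using edge_fix[OF e] by blast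
    obtain pz :: int where pz: "z = gen w [^] pz" using stab_elem[OF w z(1,4)] by blast
    obtain pf :: int where pf: "f = gen w [^] pf" using stab_elem[OF w f(1,3)] by blast
    have gw: "gen w \<in> carrier G" using gen(1)[OF w] .
    have pz0: "pz \<noteq> 0" using pz z(2) by auto
    have pf0: "pf \<noteq> 0" using pf f(2) by auto
    have eq: "z [^] pf = f [^] pz" using pz pf int_pow_pow[OF gw] by (simp add: mult.commute)
    have w': "w' \<in> V" using E_V e by blast
    show "\<exists>z\<in>carrier G. z \<noteq> \<one> \<and> act z u = u \<and> act z w' = w'"
    proof (intro bexI conjI)
      show "act (z [^] pf) u = u" using fix_pow[OF u z(1,3)] .
      show "act (z [^] pf) w' = w'" using eq fix_pow[OF w' f(1,4)] by simp
      show "z [^] pf \<noteq> \<one>"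
      proof
        assume "z [^] pf = \<one>"
        then have "gen w [^] (pz * pf) = \<one>" using pz int_pow_pow[OF gw] by simp
        then have "pz * pf = 0" by (rule gen_order[OF w])
        then show False using pz0 pf0 by simp
      qed
    qed (use z(1) in simp)
  qed
  then show ?thesis using p(3) last_in_set p(1) by (metis walk_Nil)
qed

lemma orbit_finite_aux:
  assumes a: "a \<in> carrier G" and y: "y \<in> V" and P: "P \<noteq> 0" and f: "act (a [^] (P::int)) y = y"
  shows "{act (a [^] (k::int)) y | k. True} \<subseteq> (\<lambda>j. act (a [^] j) y) ` {0..<\<bar>P\<bar>}"
proof
  fix x assume "x \<in> {act (a [^] (k::int)) y | k. True}"
  then obtain k where k: "x = act (a [^] (k::int)) y" by blast
  define n where "n = \<bar>P\<bar>"
  have n0: "n > 0" using P n_def by simp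
  have fn: "act (a [^] n) y = y"
  proof (cases "P \<ge> 0")
    case True then show ?thesis using f n_def by simp
  next
    case False
    then have "n = P * (-1)" using n_def by simp
    then have "a [^] n = (a [^] P) [^] (-1::int)" using int_pow_pow[OF a] by simp
    then show ?thesis using fix_pow[OF y _ f] a by simp
  qed
  have "k = (k mod n) + n * (k div n)" by simp
  then have "a [^] k = a [^] (k mod n) \<otimes> a [^] (n * (k div n))"
    using int_pow_mult[OF a] by metis
  moreover have "a [^] (n * (k div n)) = (a [^] n) [^] (k div n)" using int_pow_pow[OF a] by simp
  moreover have "act ((a [^] n) [^] (k div n)) y = y" using fix_pow[OF y _ fn] a by simp
  ultimately have "x = act (a [^] (k mod n)) y" using k act_mult a y by simp
  moreover have "k mod n \<in> {0..<n}" using n0 by simp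
  ultimately show "x \<in> (\<lambda>j. act (a [^] j) y) ` {0..<\<bar>P\<bar>}" using n_def by blast
qed

lemma orbit_finite:
  assumes a: "a \<in> carrier G" and y: "y \<in> V" and P: "P \<noteq> 0" and f: "act (a [^] (P::int)) y = y"
  shows "finite {act (a [^] (k::int)) y | k. True}"
  using orbit_finite_aux[OF assms] finite_subset by blast

lemma stab_orbit_finite:
  assumes x: "x \<in> V" and y: "y \<in> V"
  shows "finite {act (gen x [^] (k::int)) y | k. True}"
proof -
  obtain z where z: "z \<in> carrier G" "z \<noteq> \<one>" "act z x = x" "act z y = y" using common_fix[OF x y] by blast
  obtain P :: int where P: "z = gen x [^] P" using stab_elem[OF x z(1,3)] by blast
  have "P \<noteq> 0" using P z(2) by auto
  then show ?thesis using orbit_finite[OF gen(1)[OF x] y] P z(4) by blast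
qed

lemma nbrs_finite:
  assumes x: "x \<in> V"
  shows "finite {w. (x, w) \<in> E}"
proof -
  obtain FE where FE: "finite FE" "FE \<subseteq> E" "E = {(act g u, act g v) | g u v. g \<in> carrier G \<and> (u, v) \<in> FE}"
    using cocompE by blast
  define S where "S = (\<lambda>(u, u'). {act g u' | g. g \<in> carrier G \<and> act g u = x})"
  have sub: "{w. (x, w) \<in> E} \<subseteq> \<Union> (S ` FE)"
  proof
    fix w assume "w \<in> {w. (x, w) \<in> E}"
    then obtain g u v where "g \<in> carrier G" "(u, v) \<in> FE" "x = act g u" "w = act g v"
      using FE(3) by blast
    then show "w \<in> \<Union> (S ` FE)" unfolding S_def by blast
  qed
  have "finite (S e)" if e: "e \<in> FE" for e
  proof -
    obtain u u' where uu: "e = (u, u')" by (cases e)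
    have eE: "(u, u') \<in> E" using e uu FE(2) by blast
    have u: "u \<in> V" and u': "u' \<in> V" using E_V eE by auto
    show ?thesis
    proof (cases "\<exists>g0\<in>carrier G. act g0 u = x")
      case False
      then have "S e = {}" unfolding S_def uu by auto
      then show ?thesis by simp
    next
      case True
      then obtain g0 where g0: "g0 \<in> carrier G" "act g0 u = x" by blast
      have "S e \<subseteq> act g0 ` {act (gen u [^] (k::int)) u' | k. True}"
      proof
        fix w assume "w \<in> S e"
        then obtain g where g: "g \<in> carrier G" "act g u = x" "w = act g u'" unfolding S_def uu by auto
        have "act (inv g0 \<otimes> g) u = act (inv g0) (act g0 u)" using g g0 u act_mult by simp
        also have "\<dots> = u" by (rule act_inv1[OF g0(1) u])
        finally have "act (inv g0 \<otimes> g) u = u" .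
        moreover have "inv g0 \<otimes> g \<in> carrier G" using g g0 by simp
        ultimately obtain k :: int where k: "inv g0 \<otimes> g = gen u [^] k"
          using stab_elem[OF u] by blast
        have "g0 \<otimes> (inv g0 \<otimes> g) = g" using g g0 by (simp add: m_assoc[symmetric])
        then have "g = g0 \<otimes> gen u [^] k" using k by simp
        then have "w = act g0 (act (gen u [^] k) u')" using g g0 act_mult u' gen(1)[OF u] by simp
        then show "w \<in> act g0 ` {act (gen u [^] (k::int)) u' | k. True}" by blast
      qed
      moreover have "finite {act (gen u [^] (k::int)) u' | k. True}" using stab_orbit_finite[OF u u'] .
      ultimately show ?thesis using finite_subset by blast
    qed
  qed
  then show ?thesis using sub FE(1) finite_subset by blast
qed

lemma ball_finite:
  assumes x: "x \<in> V"
  shows "finite {y. graph_dist_le V E x y d}"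
proof (induction d)
  case 0
  have "{y. graph_dist_le V E x y 0} \<subseteq> {x}"
  proof
    fix y assume "y \<in> {y. graph_dist_le V E x y 0}"
    then obtain p where "graph_walk V E p" "hd p = x" "last p = y" "length p - 1 \<le> 0"
      unfolding graph_dist_le_def by blast
    then show "y \<in> {x}" by (cases p) auto
  qed
  then show ?case using finite_subset by blast
next
  case (Suc d)
  let ?B = "{y. graph_dist_le V E x y d}"
  have "{y. graph_dist_le V E x y (Suc d)} \<subseteq> ?B \<union> \<Union> ((\<lambda>z. {w. (z, w) \<in> E}) ` ?B)"
  proof
    fix y assume "y \<in> {y. graph_dist_le V E x y (Suc d)}"
    then obtain p where p: "graph_walk V E p" "hd p = x" "last p = y" "length p - 1 \<le> Suc d"
      unfolding graph_dist_le_def by blast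
    show "y \<in> ?B \<union> \<Union> ((\<lambda>z. {w. (z, w) \<in> E}) ` ?B)"
    proof (cases "length p - 1 \<le> d")
      case True then show ?thesis using p unfolding graph_dist_le_def by blast
    next
      case False
      then have len: "length p \<ge> 2" using p by simp
      define q where "q = butlast p"
      have pq: "p = q @ [y]" using p(1,3) unfolding q_def by (metis append_butlast_last_id walk_Nil)
      have qne: "q \<noteq> []" using len pq by auto
      have wq: "graph_walk V E q" "(last q, y) \<in> E"
        using p(1) pq qne walk_append_iff[of q "[y]" V E] by auto
      have "graph_dist_le V E x (last q) d"
        unfolding graph_dist_le_def using wq p pq qne by (intro exI[of _ q]) auto
      then show ?thesis using wq(2) by blast
    qed
  qed
  moreover have "finite (\<Union> ((\<lambda>z. {w. (z, w) \<in> E}) ` ?B))"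
    using Suc.IH nbrs_finite dist_in_V by (metis (no_types, lifting) finite_UN_I mem_Collect_eq)
  ultimately show ?case using Suc.IH finite_subset by blast
qed

end


fun wball :: "('g, 'b) monoid_scheme \<Rightarrow> 'g set \<Rightarrow> nat \<Rightarrow> 'g set" where
  "wball G S 0 = {\<one>\<^bsub>G\<^esub>}"
| "wball G S (Suc n) = wball G S n \<union> {g \<otimes>\<^bsub>G\<^esub> s | g s. g \<in> wball G S n \<and> s \<in> S}"

locale cay = group G for G (structure) +
  fixes S assumes S_fsg: "finite_symmetric_generating_set G S"
begin

lemma S_sub: "S \<subseteq> carrier G" using S_fsg by (simp add: finite_symmetric_generating_set_def)
lemma S_fin: "finite S" using S_fsg by (simp add: finite_symmetric_generating_set_def)
lemma S_inv: "s \<in> S \<Longrightarrow> inv s \<in> S" using S_fsg by (simp add: finite_symmetric_generating_set_def)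
lemma S_gen: "generate G S = carrier G" using S_fsg by (simp add: finite_symmetric_generating_set_def)

abbreviation "CE \<equiv> cayley_edges G S"

lemma wball_carrier: "wball G S n \<subseteq> carrier G"
  by (induction n) (use S_sub in auto)

lemma wball_finite: "finite (wball G S n)"
proof (induction n)
  case 0 then show ?case by simp
next
  case (Suc n)
  have "{g \<otimes> s | g s. g \<in> wball G S n \<and> s \<in> S} = (\<lambda>(g, s). g \<otimes> s) ` (wball G S n \<times> S)" by auto
  then show ?case using Suc S_fin by simp
qed

lemma wball_mono: "n \<le> m \<Longrightarrow> wball G S n \<subseteq> wball G S m"
proof (induction m)
  case 0 then show ?case by simp
next
  case (Suc m) then show ?case by (cases "n = Suc m") auto
qed

lemma wball_mult: "g \<in> wball G S n \<Longrightarrow> h \<in> wball G S m \<Longrightarrow> g \<otimes> h \<in> wball G S (n + m)"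
proof (induction m arbitrary: h)
  case 0
  then have "g \<in> carrier G" using wball_carrier by blast
  then show ?case using 0 by simp
next
  case (Suc m)
  show ?case
  proof (cases "h \<in> wball G S m")
    case True
    then show ?thesis using Suc.IH[OF Suc.prems(1)] wball_mono[of "n + m" "n + Suc m"] by auto
  next
    case False
    then obtain h' s where hs: "h = h' \<otimes> s" "h' \<in> wball G S m" "s \<in> S" using Suc.prems(2) by auto
    have "g \<otimes> h' \<in> wball G S (n + m)" using Suc.IH[OF Suc.prems(1) hs(2)] .
    moreover have "g \<otimes> h = (g \<otimes> h') \<otimes> s"
    proof -
      have "g \<in> carrier G" "h' \<in> carrier G" "s \<in> carrier G"
        using hs Suc.prems(1) wball_carrier S_sub by blast+
      then show ?thesis using hs(1) by (simp add: m_assoc)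
    qed
    ultimately show ?thesis using hs(3) by auto
  qed
qed

lemma S_wball: "s \<in> S \<Longrightarrow> s \<in> wball G S 1"
proof -
  assume s: "s \<in> S"
  then have "\<one> \<otimes> s = s" using S_sub by auto
  then show ?thesis using s by (auto intro!: exI[of _ "\<one>"] exI[of _ s])
qed

lemma wball_inv: "g \<in> wball G S n \<Longrightarrow> inv g \<in> wball G S n"
proof (induction n arbitrary: g)
  case 0 then show ?case by simp
next
  case (Suc n)
  show ?case
  proof (cases "g \<in> wball G S n")
    case True then show ?thesis using Suc.IH by simp
  next
    case False
    then obtain h s where hs: "g = h \<otimes> s" "h \<in> wball G S n" "s \<in> S" using Suc.prems by auto
    have hc: "h \<in> carrier G" using hs wball_carrier by blast
    have sc: "s \<in> carrier G" using hs S_sub by blast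
    have "inv g = inv s \<otimes> inv h" using hs hc sc by (simp add: inv_mult_group)
    moreover have "inv s \<otimes> inv h \<in> wball G S (1 + n)"
      using wball_mult[OF S_wball[OF S_inv[OF hs(3)]] Suc.IH[OF hs(2)]] .
    ultimately show ?thesis by simp
  qed
qed

lemma carrier_wball: "g \<in> carrier G \<Longrightarrow> \<exists>n. g \<in> wball G S n"
proof -
  assume "g \<in> carrier G"
  then have "g \<in> generate G S" using S_gen by simp
  then show ?thesis
  proof (induction rule: generate.induct)
    case one then show ?case by (auto intro: exI[of _ 0])
  next
    case (incl h) then show ?case using S_wball by blast
  next
    case (inv h) then show ?case using S_wball S_inv by blast
  next
    case (eng h1 h2) then show ?case using wball_mult by blast
  qed
qed

lemma CE_iff: "(g, h) \<in> CE \<longleftrightarrow> g \<in> carrier G \<and> (\<exists>s\<in>S. h = g \<otimes> s)"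
  unfolding cayley_edges_def by auto

lemma cay_dist_of_wball:
  assumes u: "u \<in> carrier G" and v: "v \<in> carrier G" and w: "inv u \<otimes> v \<in> wball G S n"
  shows "graph_dist_le (carrier G) CE u v n"
  using v w
proof (induction n arbitrary: v)
  case 0
  then have e1: "inv u \<otimes> v = \<one>" by simp
  have "v = u \<otimes> (inv u \<otimes> v)" using u 0(1) by (simp add: m_assoc[symmetric])
  then have "v = u" using e1 u by simp
  then show ?case using dist_refl[of u "carrier G" CE] u by simp
next
  case (Suc n)
  show ?case
  proof (cases "inv u \<otimes> v \<in> wball G S n")
    case True then show ?thesis using Suc.IH[OF Suc.prems(1)] dist_mono by fastforce
  next
    case False
    then obtain h s where hs: "inv u \<otimes> v = h \<otimes> s" "h \<in> wball G S n" "s \<in> S" using Suc.prems by auto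
    have hc: "h \<in> carrier G" using hs wball_carrier by blast
    have sc: "s \<in> carrier G" using hs S_sub by blast
    have "inv u \<otimes> (u \<otimes> h) = h" using u hc by (simp add: m_assoc[symmetric])
    then have d1: "graph_dist_le (carrier G) CE u (u \<otimes> h) n"
      using Suc.IH[of "u \<otimes> h"] hs(2) u hc by simp
    have "v = u \<otimes> (inv u \<otimes> v)" using u Suc.prems(1) by (simp add: m_assoc[symmetric])
    then have "v = u \<otimes> (h \<otimes> s)" using hs(1) by simp
    then have "v = (u \<otimes> h) \<otimes> s" using u hc sc by (simp add: m_assoc)
    then have "(u \<otimes> h, v) \<in> CE" using hs(3) u hc unfolding cayley_edges_def by auto
    then have d2: "graph_dist_le (carrier G) CE (u \<otimes> h) v 1"
      using dist_edge[of "u \<otimes> h" "carrier G" v CE] u hc Suc.prems(1) by simp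
    show ?thesis using dist_trans[OF d1 d2] by simp
  qed
qed

lemma cay_walk_wball:
  assumes "graph_walk (carrier G) CE p"
  shows "inv (hd p) \<otimes> last p \<in> wball G S (length p - 1)"
  using assms
proof (induction p rule: rev_induct)
  case Nil then show ?case by simp
next
  case (snoc y q)
  show ?case
  proof (cases "q = []")
    case True
    then have "y \<in> carrier G" using snoc.prems by simp
    then show ?thesis using True by simp
  next
    case False
    have wq: "graph_walk (carrier G) CE q" "(last q, y) \<in> CE"
      using snoc.prems False walk_append_iff[of q "[y]" "carrier G" CE] by auto
    obtain s where s: "s \<in> S" "y = last q \<otimes> s" using wq(2) CE_iff by blast
    have lq: "last q \<in> carrier G" using wq(2) CE_iff by blast
    have hq: "hd q \<in> carrier G" using wq(1) walk_edges False hd_in_set by blast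
    have "inv (hd q) \<otimes> y = (inv (hd q) \<otimes> last q) \<otimes> s"
      using s lq hq S_sub by (auto simp: m_assoc)
    moreover have "(inv (hd q) \<otimes> last q) \<otimes> s \<in> wball G S (length q - 1 + 1)"
      using wball_mult[OF snoc.IH[OF wq(1)] S_wball[OF s(1)]] .
    moreover have "length q - 1 + 1 = length (q @ [y]) - 1" using False by (cases q) auto
    ultimately show ?thesis using False by simp
  qed
qed

lemma wball_of_cay_dist:
  "graph_dist_le (carrier G) CE u v n \<Longrightarrow> inv u \<otimes> v \<in> wball G S n"
  unfolding graph_dist_le_def using cay_walk_wball wball_mono by blast

lemma cay_dist_in: "graph_dist_le (carrier G) CE u v n \<Longrightarrow> u \<in> carrier G \<and> v \<in> carrier G"
  using dist_in_V[of "carrier G" CE u v n] by simp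

lemma cay_conn: "u \<in> carrier G \<Longrightarrow> v \<in> carrier G \<Longrightarrow> \<exists>n. graph_dist_le (carrier G) CE u v n"
proof -
  assume u: "u \<in> carrier G" and v: "v \<in> carrier G"
  then have "inv u \<otimes> v \<in> carrier G" by simp
  then obtain n where "inv u \<otimes> v \<in> wball G S n" using carrier_wball by blast
  then show ?thesis using cay_dist_of_wball u v by blast
qed

lemma cay_left:
  assumes g: "g \<in> carrier G" and d: "graph_dist_le (carrier G) CE u v n"
  shows "graph_dist_le (carrier G) CE (g \<otimes> u) (g \<otimes> v) n"
proof -
  have uv: "u \<in> carrier G" "v \<in> carrier G" using cay_dist_in[OF d] by auto
  have "inv (g \<otimes> u) \<otimes> (g \<otimes> v) = inv u \<otimes> v"
    using g uv by (simp add: inv_mult_group m_assoc[symmetric]) (simp add: m_assoc)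
  then show ?thesis using cay_dist_of_wball wball_of_cay_dist[OF d] g uv by simp
qed

end


context gbs begin

lemma fin_gen: "\<exists>S. finite_symmetric_generating_set G S"
proof -
  obtain FV where FV: "finite FV" "FV \<subseteq> V" "V = {act g v | g v. g \<in> carrier G \<and> v \<in> FV}"
    using cocompV by blast
  obtain FE where FE: "finite FE" "FE \<subseteq> E" "E = {(act g u, act g v) | g u v. g \<in> carrier G \<and> (u, v) \<in> FE}"
    using cocompE by blast
  define Y0 where "Y0 = FV \<union> fst ` FE \<union> snd ` FE"
  have "fst ` FE \<subseteq> V" "snd ` FE \<subseteq> V" using FE(2) E_V by force+
  then have Y0V: "Y0 \<subseteq> V" unfolding Y0_def using FV(2) by blast
  have Y0fin: "finite Y0" unfolding Y0_def using FV(1) FE(1) by simp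
  define rep where "rep y y' = (SOME g. g \<in> carrier G \<and> act g y = y')" for y y'
  define S0 where "S0 = gen ` Y0 \<union> {rep y y' | y y'. y \<in> Y0 \<and> y' \<in> Y0 \<and> (\<exists>g\<in>carrier G. act g y = y')}"
  define S where "S = S0 \<union> (\<lambda>s. inv s) ` S0"
  have rep: "rep y y' \<in> carrier G \<and> act (rep y y') y = y'" if "\<exists>g\<in>carrier G. act g y = y'" for y y'
    unfolding rep_def using that someI_ex[of "\<lambda>g. g \<in> carrier G \<and> act g y = y'"] by blast
  have S0c: "S0 \<subseteq> carrier G" unfolding S0_def using Y0V gen(1) rep by blast
  have S0fin: "finite S0"
  proof -
    have "{rep y y' | y y'. y \<in> Y0 \<and> y' \<in> Y0 \<and> (\<exists>g\<in>carrier G. act g y = y')} \<subseteq> (\<lambda>(y, y'). rep y y') ` (Y0 \<times> Y0)"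
      by auto
    moreover have "finite ((\<lambda>(y, y'). rep y y') ` (Y0 \<times> Y0))" using Y0fin by simp
    ultimately have "finite {rep y y' | y y'. y \<in> Y0 \<and> y' \<in> Y0 \<and> (\<exists>g\<in>carrier G. act g y = y')}"
      using finite_subset by blast
    then show ?thesis unfolding S0_def using Y0fin by simp
  qed
  have Sc: "S \<subseteq> carrier G" unfolding S_def using S0c by auto
  have Sfin: "finite S" unfolding S_def using S0fin by simp
  have Sinv: "\<forall>s\<in>S. inv s \<in> S"
  proof
    fix s assume "s \<in> S"
    then show "inv s \<in> S"
    proof (cases "s \<in> S0")
      case True then show ?thesis unfolding S_def by blast
    next
      case False
      then obtain t where "t \<in> S0" "s = inv t" using \<open>s \<in> S\<close> unfolding S_def by blast
      then have "inv s = t" using S0c by auto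
      then show ?thesis using \<open>t \<in> S0\<close> unfolding S_def by blast
    qed
  qed
  define H where "H = generate G S"
  have Hsub: "subgroup H G" unfolding H_def using generate_is_subgroup[OF Sc] .
  have SH: "S \<subseteq> H" unfolding H_def using generate.incl[of _ S G] by blast
  have key: "g \<in> H" if g: "g \<in> carrier G" and y: "y \<in> Y0" and y': "y' \<in> Y0" and a: "act g y = y'" for g y y'
  proof -
    have ex: "\<exists>g\<in>carrier G. act g y = y'" using g a by blast
    then have r: "rep y y' \<in> carrier G" "act (rep y y') y = y'" using rep by auto
    have "rep y y' \<in> {rep y y' | y y'. y \<in> Y0 \<and> y' \<in> Y0 \<and> (\<exists>g\<in>carrier G. act g y = y')}"
      using y y' ex by blast
    then have "rep y y' \<in> S0" unfolding S0_def by (rule UnI2)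
    then have rS: "rep y y' \<in> H" using SH unfolding S_def by blast
    have yV: "y \<in> V" using y Y0V by blast
    have "act (inv (rep y y') \<otimes> g) y = act (inv (rep y y')) (act (rep y y') y)"
      using act_mult r g yV a by simp
    also have "\<dots> = y" by (rule act_inv1[OF r(1) yV])
    finally have f: "act (inv (rep y y') \<otimes> g) y = y" .
    obtain k :: int where k: "inv (rep y y') \<otimes> g = gen y [^] k"
      using stab_elem[OF yV _ f] r(1) g by blast
    have "gen y \<in> S0" unfolding S0_def using y by blast
    then have "gen y \<in> H" using SH unfolding S_def by blast
    then have "gen y [^] k \<in> H" using subgroup_int_pow_closed[OF Hsub] by blast
    then have "rep y y' \<otimes> (inv (rep y y') \<otimes> g) \<in> H" using k rS subgroup.m_closed[OF Hsub] by simp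
    moreover have "rep y y' \<otimes> (inv (rep y y') \<otimes> g) = g" using r(1) g by (simp add: m_assoc[symmetric])
    ultimately show "g \<in> H" by simp
  qed
  obtain xs where xs: "xs \<in> FV" using FV(3) V_ne by blast
  have xsY: "xs \<in> Y0" unfolding Y0_def using xs by blast
  have xsV: "xs \<in> V" using xs FV(2) by blast
  have reach: "\<exists>h\<in>H. \<exists>y\<in>Y0. v = act h y" if v: "v \<in> V" for v
  proof -
    obtain p where p: "graph_walk V E p" "hd p = xs" "last p = v" using conn[OF xsV v] by blast
    have "\<forall>w\<in>set p. \<exists>h\<in>H. \<exists>y\<in>Y0. w = act h y"
    proof (rule walk_prop[OF p(1)])
      have "\<one> \<in> H" using Hsub subgroup.one_closed by blast
      moreover have "act \<one> xs = xs" using act_one xsV by simp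
      ultimately have "hd p = act \<one> xs" using p(2) by simp
      then show "\<exists>h\<in>H. \<exists>y\<in>Y0. hd p = act h y" using \<open>\<one> \<in> H\<close> xsY by blast
    next
      fix w w' assume w: "w \<in> V" and h: "\<exists>h\<in>H. \<exists>y\<in>Y0. w = act h y" and e: "(w, w') \<in> E"
      obtain h y where hy: "h \<in> H" "y \<in> Y0" "w = act h y" using h by blast
      obtain f u u' where fu: "f \<in> carrier G" "(u, u') \<in> FE" "w = act f u" "w' = act f u'"
        using e FE(3) by blast
      have hc: "h \<in> carrier G" using hy(1) Hsub subgroup.subset by blast
      have "u \<in> fst ` FE" "u' \<in> snd ` FE" using fu(2) by force+
      then have uY: "u \<in> Y0" "u' \<in> Y0" unfolding Y0_def by blast+
      have uV: "u \<in> V" using uY Y0V by blast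
      have yV: "y \<in> V" using hy Y0V by blast
      have "act (inv h \<otimes> f) u = act (inv h) (act h y)" using act_mult hc fu uV hy by simp
      also have "\<dots> = y" by (rule act_inv1[OF hc yV])
      finally have "act (inv h \<otimes> f) u = y" .
      then have "inv h \<otimes> f \<in> H" using key[of "inv h \<otimes> f" u y] hc fu(1) uY hy(2) by simp
      then have "h \<otimes> (inv h \<otimes> f) \<in> H" using hy(1) subgroup.m_closed[OF Hsub] by simp
      moreover have "h \<otimes> (inv h \<otimes> f) = f" using hc fu(1) by (simp add: m_assoc[symmetric])
      ultimately have "f \<in> H" by simp
      then show "\<exists>h\<in>H. \<exists>y\<in>Y0. w' = act h y" using fu(4) uY(2) by blast
    qed
    moreover have "p \<noteq> []" using p(1) by auto
    ultimately show ?thesis using p(3) last_in_set by blast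
  qed
  have "carrier G \<subseteq> H"
  proof
    fix g assume g: "g \<in> carrier G"
    then have "act g xs \<in> V" using act_V xsV by simp
    then obtain h y where hy: "h \<in> H" "y \<in> Y0" "act g xs = act h y" using reach by blast
    have hc: "h \<in> carrier G" using hy(1) Hsub subgroup.subset by blast
    have yV: "y \<in> V" using hy Y0V by blast
    have "act (inv h \<otimes> g) xs = act (inv h) (act h y)" using act_mult hc g xsV hy by simp
    also have "\<dots> = y" by (rule act_inv1[OF hc yV])
    finally have "inv h \<otimes> g \<in> H" using key[of "inv h \<otimes> g" xs y] hc g xsY hy(2) by simp
    then have "h \<otimes> (inv h \<otimes> g) \<in> H" using hy(1) subgroup.m_closed[OF Hsub] by simp
    moreover have "h \<otimes> (inv h \<otimes> g) = g" using hc g by (simp add: m_assoc[symmetric])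
    ultimately show "g \<in> H" by simp
  qed
  then have "generate G S = carrier G" using generate_incl[OF Sc] unfolding H_def by blast
  then show ?thesis unfolding finite_symmetric_generating_set_def using Sc Sfin Sinv by blast
qed

end


context gbs begin

definition moved :: "'v \<Rightarrow> 'v \<Rightarrow> bool" where
  "moved x n \<longleftrightarrow> (\<exists>c\<in>carrier G. act c x = x \<and> act c n \<noteq> n)"

definition Xs :: "'v \<Rightarrow> 'v set" where
  "Xs x = \<Union> {br x n | n. (x, n) \<in> E \<and> moved x n}"

lemma fix_nat_pow:
  assumes v: "v \<in> V" and g: "g \<in> carrier G" and f: "act g v = v"
  shows "act (g [^] (t::nat)) v = v"
proof -
  have "g [^] (int t) = g [^] t" by (rule int_pow_int)
  then show ?thesis using fix_pow[OF v g f, of "int t"] by simp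
qed

lemma Xs_act:
  assumes g: "g \<in> carrier G" and x: "x \<in> V"
  shows "Xs (act g x) \<subseteq> act g ` Xs x"
proof
  fix w assume "w \<in> Xs (act g x)"
  then obtain n where n: "w \<in> br (act g x) n" "(act g x, n) \<in> E" "moved (act g x) n"
    unfolding Xs_def by blast
  obtain c where c: "c \<in> carrier G" "act c (act g x) = act g x" "act c n \<noteq> n"
    using n(3) unfolding moved_def by blast
  have nV: "n \<in> V" using n(2) E_V by blast
  have ig: "inv g \<in> carrier G" using g by simp
  define n' where "n' = act (inv g) n"
  have e: "(x, n') \<in> E"
    using act_E'[OF ig n(2)] act_inv1[OF g x] unfolding n'_def by simp
  have "act (inv g \<otimes> c \<otimes> g) x = act (inv g) (act c (act g x))"
    using act_mult ig c(1) g x act_V by simp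
  then have m1: "act (inv g \<otimes> c \<otimes> g) x = x" using c(2) act_inv1[OF g x] by simp
  have n'V: "n' \<in> V" unfolding n'_def using act_V[OF ig nV] .
  have gn': "act g n' = n" unfolding n'_def using act_inv2[OF g nV] .
  have "act (inv g \<otimes> c \<otimes> g) n' = act (inv g) (act c (act g n'))"
    using act_mult ig c(1) g n'V act_V by simp
  then have m2: "act (inv g \<otimes> c \<otimes> g) n' = act (inv g) (act c n)" using gn' by simp
  have "act (inv g) (act c n) \<noteq> n'"
  proof
    assume "act (inv g) (act c n) = n'"
    then have "act (inv g) (act c n) = act (inv g) n" unfolding n'_def .
    then have "act c n = n" using act_inj[OF ig] act_V[OF c(1) nV] nV by blast
    then show False using c(3) by simp
  qed
  then have mv: "moved x n'" unfolding moved_def using m1 m2 ig c(1) g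
    by (intro bexI[of _ "inv g \<otimes> c \<otimes> g"]) auto
  have gxV: "act g x \<in> V" using act_V[OF g x] .
  have "act (inv g) w \<in> br (act (inv g) (act g x)) (act (inv g) n)"
    using br_act[OF ig gxV n(1)] .
  then have "act (inv g) w \<in> br x n'" unfolding n'_def using act_inv1[OF g x] by simp
  then have "act (inv g) w \<in> Xs x" unfolding Xs_def using e mv by blast
  moreover have "w = act g (act (inv g) w)" using act_inv2[OF g] br_V[OF n(1)] by simp
  ultimately show "w \<in> act g ` Xs x" by blast
qed

lemma good_edge: "\<exists>x n c. (x, n) \<in> E \<and> c \<in> carrier G \<and> act c x = x \<and> act c n \<noteq> n \<and> infinite (br x n)"
proof (rule ccontr)
  assume "\<not> ?thesis"
  then have H: "finite (br x n)" if "(x, n) \<in> E" "moved x n" for x n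
    using that unfolding moved_def by blast
  have Xfin: "finite (Xs x)" if x: "x \<in> V" for x
  proof -
    have "{br x n | n. (x, n) \<in> E \<and> moved x n} \<subseteq> br x ` {n. (x, n) \<in> E}" by blast
    then have "finite {br x n | n. (x, n) \<in> E \<and> moved x n}"
      using nbrs_finite[OF x] finite_subset by blast
    moreover have "\<forall>A\<in>{br x n | n. (x, n) \<in> E \<and> moved x n}. finite A" using H by blast
    ultimately show ?thesis unfolding Xs_def by (intro finite_Union) auto
  qed
  obtain FV where FV: "finite FV" "FV \<subseteq> V" "V = {act g v | g v. g \<in> carrier G \<and> v \<in> FV}"
    using cocompV by blast
  define B where "B = (\<Sum>x'\<in>FV. card (Xs x'))"
  have Xcard: "card (Xs x) \<le> B" if x: "x \<in> V" for x
  proof -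
    obtain g x' where gx: "g \<in> carrier G" "x' \<in> FV" "x = act g x'" using x FV(3) by blast
    have x'V: "x' \<in> V" using gx FV(2) by blast
    have sub: "Xs x \<subseteq> act g ` Xs x'" using Xs_act[OF gx(1) x'V] gx(3) by simp
    have "card (Xs x) \<le> card (act g ` Xs x')"
      by (rule card_mono[OF finite_imageI[OF Xfin[OF x'V]] sub])
    also have "\<dots> \<le> card (Xs x')" by (rule card_image_le[OF Xfin[OF x'V]])
    also have "\<dots> \<le> B" unfolding B_def using member_le_sum[of x' FV "\<lambda>x'. card (Xs x')"] gx(2) FV(1) by simp
    finally show ?thesis .
  qed
  obtain x0 where x0: "x0 \<in> V" using V_ne by blast
  define a where "a = gen x0"
  have a: "a \<in> carrier G" unfolding a_def using gen(1)[OF x0] .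
  have afix: "act a x0 = x0" unfolding a_def using gen_fix[OF x0, of 1] gen(1)[OF x0] by simp
  have per: "\<exists>p::nat. 0 < p \<and> p \<le> B + 1 \<and> act (a [^] p) v = v" if v: "v \<in> V" for v
  proof -
    obtain p where p: "graph_walk V E p" "hd p = x0" "last p = v" using conn[OF x0 v] by blast
    from walk_distinct[OF p(1)] obtain q where q0: "graph_walk V E q" "distinct q" "hd q = hd p" "last q = last p"
      by blast
    then have q: "graph_walk V E q" "distinct q" "hd q = x0" "last q = v" using p(2,3) by simp_all
    have qne: "q \<noteq> []" using q(1) by auto
    have qV: "\<And>i. i < length q \<Longrightarrow> q ! i \<in> V" using walk_edges[OF q(1)] nth_mem by blast
    have qE: "\<And>i. Suc i < length q \<Longrightarrow> (q ! i, q ! Suc i) \<in> E" using q(1) unfolding graph_walk_def by blast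
    define ma where "ma i \<longleftrightarrow> Suc i < length q \<and> moved (q ! i) (q ! Suc i)" for i
    have fixq: "act a (q ! i) = q ! i" if "i < length q" "\<forall>j<i. \<not> ma j" for i
      using that
    proof (induction i)
      case 0 then show ?case using q(3) qne afix by (simp add: hd_conv_nth)
    next
      case (Suc i)
      then have IH: "act a (q ! i) = q ! i" by simp
      have "\<not> moved (q ! i) (q ! Suc i)" using Suc.prems unfolding ma_def by blast
      then show ?case using IH a unfolding moved_def by blast
    qed
    show ?thesis
    proof (cases "\<exists>i. ma i")
      case False
      have "act a (q ! (length q - 1)) = q ! (length q - 1)" using fixq False qne by simp
      then have "act a v = v" using q(4) qne by (simp add: last_conv_nth)
      then show ?thesis using a by (intro exI[of _ "1::nat"]) simp
    next
      case True
      define i where "i = (LEAST i. ma i)"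
      have mi: "ma i" unfolding i_def by (rule LeastI_ex[OF True])
      have before: "\<forall>j<i. \<not> ma j" unfolding i_def using not_less_Least by blast
      have ilen: "Suc i < length q" using mi unfolding ma_def by simp
      define x where "x = q ! i"
      define n where "n = q ! Suc i"
      have xV: "x \<in> V" unfolding x_def using qV ilen by simp
      have ax: "act a x = x" unfolding x_def using fixq[OF _ before] ilen by simp
      have xn: "(x, n) \<in> E" unfolding x_def n_def using qE ilen .
      have mxn: "moved x n" using mi unfolding ma_def x_def n_def by simp
      obtain c where c: "c \<in> carrier G" "act c x = x" "act c n \<noteq> n" using mxn unfolding moved_def by blast
      have nV: "n \<in> V" using xn E_V by blast
      have vbr: "v \<in> br x n"
        unfolding br_def
      proof (intro CollectI exI[of _ "drop (Suc i) q"] conjI)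
        show "graph_walk V E (drop (Suc i) q)" using walk_drop[OF q(1) ilen] .
        show "hd (drop (Suc i) q) = n" unfolding n_def using ilen by (simp add: hd_drop_conv_nth)
        show "last (drop (Suc i) q) = v" using q(4) ilen by simp
        show "x \<notin> set (drop (Suc i) q)"
        proof
          assume "x \<in> set (drop (Suc i) q)"
          then obtain j where j: "j < length (drop (Suc i) q)" "drop (Suc i) q ! j = x"
            unfolding in_set_conv_nth by blast
          then have "q ! (Suc i + j) = q ! i" using ilen unfolding x_def by simp
          moreover have "Suc i + j < length q" using j by simp
          ultimately show False using q(2) ilen nth_eq_iff_index_eq by fastforce
        qed
      qed
      have inX: "act (a [^] k) v \<in> Xs x" for k :: nat
      proof -
        have ak: "a [^] k \<in> carrier G" using a by simp
        have akx: "act (a [^] k) x = x" using fix_nat_pow[OF xV a ax] .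
        have "act (a [^] k) v \<in> br (act (a [^] k) x) (act (a [^] k) n)" using br_act[OF ak xV vbr] .
        then have b1: "act (a [^] k) v \<in> br x (act (a [^] k) n)" using akx by simp
        have e1: "(x, act (a [^] k) n) \<in> E" using act_E'[OF ak xn] akx by simp
        define c' where "c' = a [^] k \<otimes> c \<otimes> inv (a [^] k)"
        have c'c: "c' \<in> carrier G" unfolding c'_def using ak c(1) by simp
        have "act c' x = act (a [^] k) (act c (act (inv (a [^] k)) x))"
          unfolding c'_def using act_mult ak c(1) xV act_V by simp
        moreover have "act (inv (a [^] k)) x = x" using act_inv1[OF ak xV] akx by simp
        ultimately have c'x: "act c' x = x" using c(2) akx by simp
        have "act c' (act (a [^] k) n) = act (a [^] k) (act c (act (inv (a [^] k)) (act (a [^] k) n)))"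
          unfolding c'_def using act_mult ak c(1) nV act_V by simp
        then have c'n: "act c' (act (a [^] k) n) = act (a [^] k) (act c n)" using act_inv1[OF ak nV] by simp
        have "act (a [^] k) (act c n) \<noteq> act (a [^] k) n"
          using act_inj[OF ak] act_V[OF c(1) nV] nV c(3) by blast
        then have "moved x (act (a [^] k) n)" unfolding moved_def using c'c c'x c'n by auto
        then show ?thesis unfolding Xs_def using b1 e1 by blast
      qed
      define f where "f k = act (a [^] k) v" for k :: nat
      have "f ` {0..B} \<subseteq> Xs x" unfolding f_def using inX by blast
      then have "card (f ` {0..B}) \<le> card (Xs x)" using Xfin[OF xV] card_mono by blast
      then have "card (f ` {0..B}) \<le> B" using Xcard[OF xV] by linarith
      then have "\<not> inj_on f {0..B}" using card_image by fastforce
      then obtain k1 k2 where kk: "k1 \<in> {0..B}" "k2 \<in> {0..B}" "k1 \<noteq> k2" "f k1 = f k2"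
        unfolding inj_on_def by blast
      have "\<exists>k1 k2. k1 < k2 \<and> k2 \<le> B \<and> f k1 = f k2"
      proof (cases "k1 < k2")
        case True then show ?thesis using kk by auto
      next
        case False then show ?thesis using kk by (intro exI[of _ k2] exI[of _ k1]) auto
      qed
      then obtain l1 l2 where ll: "l1 < l2" "l2 \<le> B" "f l1 = f l2" by blast
      have "a [^] l2 = a [^] l1 \<otimes> a [^] (l2 - l1)" using nat_pow_mult[OF a, of l1 "l2 - l1"] ll(1) by simp
      then have "act (a [^] l1) (act (a [^] (l2 - l1)) v) = act (a [^] l1) v"
        using ll(3) unfolding f_def using act_mult a v by simp
      then have "act (a [^] (l2 - l1)) v = v"
        using act_inj[of "a [^] l1"] a v act_V[of "a [^] (l2 - l1)" v] by simp
      then show ?thesis using ll by (intro exI[of _ "l2 - l1"]) auto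
    qed
  qed
  define N :: nat where "N = fact (B + 1)"
  have allfix: "act (a [^] N) v = v" if v: "v \<in> V" for v
  proof -
    obtain p :: nat where p: "0 < p" "p \<le> B + 1" "act (a [^] p) v = v" using per[OF v] by blast
    have "p dvd N" unfolding N_def using dvd_fact[of p "B + 1"] p(1,2) by simp
    then obtain t where t: "N = p * t" by blast
    have "a [^] N = (a [^] p) [^] t" using t nat_pow_pow[OF a] by simp
    then show ?thesis using fix_nat_pow[OF v _ p(3)] a by simp
  qed
  have "a [^] N = \<one>" using faithful allfix a by simp
  moreover have "a [^] (int N) = a [^] N" by (rule int_pow_int)
  ultimately have "a [^] (int N) = \<one>" by simp
  then have "int N = 0" using gen_order[OF x0] unfolding a_def by blast
  moreover have "N > 0" unfolding N_def by simp
  ultimately show False by simp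
qed

lemma good_config:
  "\<exists>x n c b. (x, n) \<in> E \<and> c \<in> carrier G \<and> act c x = x \<and> act c n \<noteq> n \<and> b \<in> V \<and>
     infinite (br x n \<inter> {act g b | g. g \<in> carrier G})"
proof -
  obtain x n c where xnc: "(x, n) \<in> E" "c \<in> carrier G" "act c x = x" "act c n \<noteq> n" "infinite (br x n)"
    using good_edge by blast
  obtain FV where FV: "finite FV" "FV \<subseteq> V" "V = {act g v | g v. g \<in> carrier G \<and> v \<in> FV}"
    using cocompV by blast
  have "br x n \<subseteq> (\<Union>b\<in>FV. br x n \<inter> {act g b | g. g \<in> carrier G})"
  proof
    fix w assume w: "w \<in> br x n"
    then have "w \<in> V" using br_V by blast
    then obtain g b where "g \<in> carrier G" "b \<in> FV" "w = act g b" using FV(3) by blast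
    then show "w \<in> (\<Union>b\<in>FV. br x n \<inter> {act g b | g. g \<in> carrier G})" using w by blast
  qed
  moreover have "\<exists>b\<in>FV. infinite (br x n \<inter> {act g b | g. g \<in> carrier G})"
  proof (rule ccontr)
    assume "\<not> (\<exists>b\<in>FV. infinite (br x n \<inter> {act g b | g. g \<in> carrier G}))"
    then have "finite (\<Union>b\<in>FV. br x n \<inter> {act g b | g. g \<in> carrier G})" using FV(1) by blast
    then show False using calculation xnc(5) finite_subset by blast
  qed
  then obtain b where "b \<in> FV" "infinite (br x n \<inter> {act g b | g. g \<in> carrier G})" by blast
  then show ?thesis using xnc FV(2) by blast
qed

end


lemma (in group) cancel1: "h \<in> carrier G \<Longrightarrow> b \<in> carrier G \<Longrightarrow> inv h \<otimes> (h \<otimes> b) = b"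
  by (simp add: m_assoc[symmetric])
lemma (in group) cancel2: "h \<in> carrier G \<Longrightarrow> b \<in> carrier G \<Longrightarrow> h \<otimes> (inv h \<otimes> b) = b"
  by (simp add: m_assoc[symmetric])

lemma (in group) conj_pow_nat:
  assumes h: "h \<in> carrier G" and x: "x \<in> carrier G"
  shows "(h \<otimes> x \<otimes> inv h) [^] (n::nat) = h \<otimes> x [^] n \<otimes> inv h"
proof (induction n)
  case 0 then show ?case using h by simp
next
  case (Suc n)
  have "(h \<otimes> x \<otimes> inv h) [^] Suc n = (h \<otimes> x [^] n \<otimes> inv h) \<otimes> (h \<otimes> x \<otimes> inv h)"
    using Suc by simp
  also have "\<dots> = h \<otimes> (x [^] n \<otimes> x) \<otimes> inv h"
    using h x by (simp add: m_assoc cancel1)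
  also have "\<dots> = h \<otimes> x [^] Suc n \<otimes> inv h" using h x by simp
  finally show ?case .
qed

lemma (in group) conj_pow:
  assumes h: "h \<in> carrier G" and x: "x \<in> carrier G"
  shows "(h \<otimes> x \<otimes> inv h) [^] (k::int) = h \<otimes> x [^] k \<otimes> inv h"
proof (cases "k < 0")
  case False
  then have e: "\<And>y. y [^] (nat k) = y [^] k" using pow_nat[of k] by simp
  show ?thesis using conj_pow_nat[OF h x, of "nat k"] unfolding e .
next
  case True
  define n where "n = nat (-k)"
  have kn: "k = - int n" unfolding n_def using True by simp
  have y: "h \<otimes> x \<otimes> inv h \<in> carrier G" using h x by simp
  have "(h \<otimes> x \<otimes> inv h) [^] k = inv ((h \<otimes> x \<otimes> inv h) [^] n)"
    unfolding kn by (rule int_pow_neg_int[OF y])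
  also have "\<dots> = inv (h \<otimes> x [^] n \<otimes> inv h)" using conj_pow_nat[OF h x] by simp
  also have "\<dots> = h \<otimes> inv (x [^] n) \<otimes> inv h"
    using h x by (simp add: inv_mult_group m_assoc)
  also have "inv (x [^] n) = x [^] k" unfolding kn by (rule int_pow_neg_int[OF x, symmetric])
  finally show ?thesis .
qed

lemma (in group) pow_comm:
  assumes a: "a \<in> carrier G"
  shows "a [^] (i::int) \<otimes> a [^] (j::int) = a [^] j \<otimes> a [^] i"
  using int_pow_mult[OF a, of i j] int_pow_mult[OF a, of j i] by (simp add: add.commute)

lemma finite_int_bound: "finite (A :: int set) \<Longrightarrow> \<exists>M\<ge>0. \<forall>e\<in>A. \<bar>e\<bar> \<le> M"
proof -
  assume f: "finite A"
  show ?thesis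
  proof (intro exI[of _ "\<Sum>e\<in>A. \<bar>e\<bar>"] conjI ballI)
    show "0 \<le> (\<Sum>e\<in>A. \<bar>e\<bar>)" by (simp add: sum_nonneg)
    fix e assume "e \<in> A"
    then show "\<bar>e\<bar> \<le> (\<Sum>e\<in>A. \<bar>e\<bar>)" using member_le_sum[of e A abs] f by simp
  qed
qed

lemma common_bound:
  assumes "finite I" "\<forall>i\<in>I. \<exists>d::nat. P i d" "\<And>i d d'. P i d \<Longrightarrow> d \<le> d' \<Longrightarrow> P i d'"
  shows "\<exists>D. \<forall>i\<in>I. P i D"
  using assms(1,2)
proof (induction I rule: finite_induct)
  case empty then show ?case by simp
next
  case (insert i I)
  then obtain D where D: "\<forall>i\<in>I. P i D" by blast
  obtain d where d: "P i d" using insert.prems by blast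
  show ?case
  proof (intro exI[of _ "max D d"] ballI)
    fix j assume "j \<in> insert i I"
    then show "P j (max D d)"
    proof
      assume "j = i" then show ?thesis using d assms(3)[of i d "max D d"] by simp
    next
      assume "j \<in> I" then show ?thesis using D assms(3)[of j D "max D d"] by simp
    qed
  qed
qed

lemma select_distinct:
  fixes N :: nat
  assumes inf: "infinite Y" and fin: "\<And>y. y \<in> Y \<Longrightarrow> finite (R y)"
    and sym: "\<And>y y'. y \<in> Y \<Longrightarrow> y' \<in> Y \<Longrightarrow> y' \<in> R y \<Longrightarrow> y \<in> R y'"
  shows "\<exists>f. (\<forall>i<N. f i \<in> Y) \<and> (\<forall>i<N. \<forall>i'<N. i \<noteq> i' \<longrightarrow> f i' \<notin> R (f i))"
proof (induction N)
  case 0 then show ?case by simp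
next
  case (Suc N)
  then obtain f where f: "\<forall>i<N. f i \<in> Y" "\<forall>i<N. \<forall>i'<N. i \<noteq> i' \<longrightarrow> f i' \<notin> R (f i)" by blast
  have "finite (\<Union>i<N. R (f i))" using f(1) fin by simp
  then have "infinite (Y - (\<Union>i<N. R (f i)))" using inf by (rule Diff_infinite_finite)
  then have "Y - (\<Union>i<N. R (f i)) \<noteq> {}" by (rule infinite_imp_nonempty)
  then obtain z where z: "z \<in> Y" "z \<notin> (\<Union>i<N. R (f i))" by blast
  define f' where "f' = f(N := z)"
  show ?case
  proof (intro exI[of _ f'] conjI allI impI)
    fix i assume "i < Suc N"
    then show "f' i \<in> Y" unfolding f'_def using f(1) z(1) by (cases "i = N") auto
  next
    fix i i' assume ii: "i < Suc N" "i' < Suc N" "i \<noteq> i'"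
    show "f' i' \<notin> R (f' i)"
    proof (cases "i = N")
      case True
      then have "i' < N" using ii by simp
      then have "z \<notin> R (f i')" using z(2) by blast
      then have "f i' \<notin> R z" using sym[of z "f i'"] z(1) f(1) \<open>i' < N\<close> by blast
      then show ?thesis unfolding f'_def using True ii by simp
    next
      case False
      then have iN: "i < N" using ii by simp
      show ?thesis
      proof (cases "i' = N")
        case True then show ?thesis unfolding f'_def using z(2) iN False by auto
      next
        case False then show ?thesis unfolding f'_def using f(2) iN ii \<open>i \<noteq> N\<close> by auto
      qed
    qed
  qed
qed

context gbs begin

definition orbx :: "'v \<Rightarrow> 'v \<Rightarrow> 'v set" where
  "orbx x y = {act (gen x [^] (k::int)) y | k. True}"

lemma orbx_finite: "x \<in> V \<Longrightarrow> y \<in> V \<Longrightarrow> finite (orbx x y)"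
  unfolding orbx_def using stab_orbit_finite by blast

lemma orbx_fix:
  assumes x: "x \<in> V" and y: "y \<in> V" and g: "g \<in> carrier G" and gx: "act g x = x"
  shows "act g y \<in> orbx x y"
proof -
  obtain k :: int where "g = gen x [^] k" using stab_elem[OF x g gx] by blast
  then show ?thesis unfolding orbx_def by blast
qed

lemma orbx_elem:
  assumes x: "x \<in> V" and "y' \<in> orbx x y"
  shows "\<exists>g\<in>carrier G. act g x = x \<and> y' = act g y"
proof -
  obtain k :: int where k: "y' = act (gen x [^] k) y" using assms unfolding orbx_def by blast
  then show ?thesis using gen_fix[OF x, of k] gen(1)[OF x] by blast
qed

lemma orbx_self: "x \<in> V \<Longrightarrow> y \<in> V \<Longrightarrow> y \<in> orbx x y"
  using orbx_fix[of x y \<one>] act_one by simp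

lemma orbx_sym:
  assumes x: "x \<in> V" and y: "y \<in> V" and h: "y' \<in> orbx x y"
  shows "y \<in> orbx x y'"
proof -
  obtain g where g: "g \<in> carrier G" "act g x = x" "y' = act g y" using orbx_elem[OF x h] by blast
  have "act (inv g) x = x" using act_inv1[OF g(1) x] g(2) by simp
  moreover have "y = act (inv g) y'" using g act_inv1[OF g(1) y] by simp
  moreover have "y' \<in> V" using g act_V y by simp
  ultimately show ?thesis using orbx_fix[OF x _ _] g(1) by simp
qed

lemma orbx_trans:
  assumes x: "x \<in> V" and y: "y \<in> V" and h1: "y' \<in> orbx x y" and h2: "y'' \<in> orbx x y'"
  shows "y'' \<in> orbx x y"
proof -
  obtain g where g: "g \<in> carrier G" "act g x = x" "y' = act g y" using orbx_elem[OF x h1] by blast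
  obtain g' where g': "g' \<in> carrier G" "act g' x = x" "y'' = act g' y'" using orbx_elem[OF x h2] by blast
  have "y'' = act (g' \<otimes> g) y" using g g' act_mult y by simp
  moreover have "act (g' \<otimes> g) x = x" using g g' act_mult x by simp
  ultimately show ?thesis using orbx_fix[OF x y] g(1) g'(1) by simp
qed

lemma commens:
  assumes x: "x \<in> V" and b: "b \<in> V" and h: "h \<in> carrier G"
  shows "\<exists>P Q. P \<noteq> 0 \<and> Q > 0 \<and> gen x [^] (P::int) = h \<otimes> gen b [^] (Q::int) \<otimes> inv h"
proof -
  have hb: "act h b \<in> V" using act_V h b by simp
  obtain z where z: "z \<in> carrier G" "z \<noteq> \<one>" "act z x = x" "act z (act h b) = act h b"
    using common_fix[OF x hb] by blast
  obtain P :: int where P: "z = gen x [^] P" using stab_elem[OF x z(1,3)] by blast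
  have P0: "P \<noteq> 0" using P z(2) by auto
  define w where "w = inv h \<otimes> z \<otimes> h"
  have wc: "w \<in> carrier G" unfolding w_def using h z(1) by simp
  have "act w b = act (inv h) (act z (act h b))" unfolding w_def using act_mult h z(1) b act_V by simp
  then have wb: "act w b = b" using z(4) act_inv1[OF h b] by simp
  obtain Q :: int where Q: "w = gen b [^] Q" using stab_elem[OF b wc wb] by blast
  have hw: "h \<otimes> w \<otimes> inv h = z" unfolding w_def using h z(1) by (simp add: m_assoc cancel2)
  have Q0: "Q \<noteq> 0"
  proof
    assume "Q = 0"
    then have "w = \<one>" using Q by simp
    then have "z = \<one>" using hw h by simp
    then show False using z(2) by simp
  qed
  have gb: "gen b \<in> carrier G" using gen(1)[OF b] .
  have eq: "gen x [^] P = h \<otimes> gen b [^] Q \<otimes> inv h" using hw Q P by simp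
  show ?thesis
  proof (cases "Q > 0")
    case True then show ?thesis using eq P0 by blast
  next
    case False
    then have Qn: "-Q > 0" using Q0 by simp
    have "gen x [^] (-P) = inv (gen x [^] P)" using int_pow_neg gen(1)[OF x] by simp
    also have "\<dots> = inv (h \<otimes> gen b [^] Q \<otimes> inv h)" using eq by simp
    also have "\<dots> = h \<otimes> inv (gen b [^] Q) \<otimes> inv h" using h gb by (simp add: inv_mult_group m_assoc)
    also have "\<dots> = h \<otimes> gen b [^] (-Q) \<otimes> inv h" using int_pow_neg gb by simp
    finally show ?thesis using Qn P0 by (intro exI[of _ "-P"] exI[of _ "-Q"]) simp
  qed
qed

end


locale gc = gbs G V E act + cay G S
  for G :: "('g, 'b) monoid_scheme" (structure) and V :: "'v set" and E act S
begin

lemma crossing: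
  assumes b: "b \<in> V" and x: "x \<in> V" and dS: "\<forall>s\<in>S. graph_dist_le V E b (act s b) \<delta>"
    and p: "graph_walk (carrier G) CE p" and avoid: "\<forall>g\<in>set p. \<not> graph_dist_le V E (act g b) x \<delta>"
  shows "\<exists>q. graph_walk V E q \<and> hd q = act (hd p) b \<and> last q = act (last p) b \<and> x \<notin> set q"
  using p avoid
proof (induction p)
  case Nil then show ?case by simp
next
  case (Cons g p')
  have "set (g # p') \<subseteq> carrier G" by (rule walk_edges[OF Cons.prems(1)])
  then have gc: "g \<in> carrier G" by simp
  have gb: "act g b \<in> V" using act_V gc b by simp
  have xg: "x \<noteq> act g b"
  proof
    assume "x = act g b"
    have "graph_dist_le V E (act g b) (act g b) 0" by (rule dist_refl[OF gb])
    then have "graph_dist_le V E (act g b) (act g b) \<delta>" by (rule dist_mono) simp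
    then have "graph_dist_le V E (act g b) x \<delta>" using \<open>x = act g b\<close> by simp
    then show False using Cons.prems(2) by simp
  qed
  show ?case
  proof (cases "p' = []")
    case True
    then show ?thesis using gb xg by (intro exI[of _ "[act g b]"]) auto
  next
    case False
    have wp': "graph_walk (carrier G) CE p'" "(g, hd p') \<in> CE"
      using walk_ConsE[OF Cons.prems(1) False] by simp_all
    obtain q' where q': "graph_walk V E q'" "hd q' = act (hd p') b" "last q' = act (last p') b" "x \<notin> set q'"
      using Cons.IH[OF wp'(1)] Cons.prems(2) by (meson list.set_intros(2))
    obtain s where s: "s \<in> S" "hd p' = g \<otimes> s" using wp'(2) unfolding CE_iff by blast
    have sc: "s \<in> carrier G" using s(1) S_sub by blast
    obtain r where r: "graph_walk V E r" "hd r = b" "last r = act s b" "length r - 1 \<le> \<delta>"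
      using dS s(1) unfolding graph_dist_le_def by blast
    have rne: "r \<noteq> []" using r(1) by auto
    define r' where "r' = map (act g) r"
    have wr': "graph_walk V E r'" unfolding r'_def using act_walk[OF gc r(1)] .
    have hr': "hd r' = act g b" unfolding r'_def using r(2) rne by (simp add: hd_map)
    have lr': "last r' = act (hd p') b" unfolding r'_def using r(3) rne s(2) act_mult gc sc b by (simp add: last_map)
    have xr': "x \<notin> set r'"
    proof
      assume "x \<in> set r'"
      then have "graph_dist_le V E (hd r') x \<delta>"
        using walk_mem_dist[OF wr'] r(4) unfolding r'_def by simp
      then show False using hr' Cons.prems(2) by simp
    qed
    define qq where "qq = r' @ tl q'"
    have "graph_walk V E qq" unfolding qq_def using walk_append_shared[OF wr' q'(1)] hr' lr' q'(2) by simp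
    moreover have "hd qq = act (hd (g # p')) b" "last qq = act (last (g # p')) b" "set qq \<subseteq> set r' \<union> set q'"
      unfolding qq_def using walk_hd_last_append_shared[OF wr' q'(1)] lr' q'(2,3) hr' False by auto
    ultimately show ?thesis using xr' q'(4) by blast
  qed
qed

end


context gc begin

theorem main_et: "extraterrestrial_graph (carrier G) CE"
proof -
  obtain x n c b where cfg: "(x, n) \<in> E" "c \<in> carrier G" "act c x = x" "act c n \<noteq> n" "b \<in> V"
    "infinite (br x n \<inter> {act g b | g. g \<in> carrier G})"
    using good_config by blast
  have xV: "x \<in> V" and nV: "n \<in> V" using cfg(1) E_V by auto
  have bV: "b \<in> V" by (rule cfg(5))
  define a where "a = gen x"
  have aC: "a \<in> carrier G" unfolding a_def by (rule gen(1)[OF xV])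
  obtain z where z: "z \<in> carrier G" "z \<noteq> \<one>" "act z x = x" "act z n = n" using common_fix[OF xV nV] by blast
  obtain p0 :: int where p0: "z = a [^] p0" using stab_elem[OF xV z(1,3)] unfolding a_def by blast
  have p00: "p0 \<noteq> 0" using p0 z(2) by auto
  define A where "A j = a [^] (p0 * j)" for j :: int
  have AC: "A j \<in> carrier G" for j unfolding A_def using aC by simp
  have Ax: "act (A j) x = x" for j unfolding A_def a_def using gen_fix[OF xV] by simp
  have An: "act (A j) n = n" for j
  proof -
    have "A j = z [^] j" unfolding A_def p0 using int_pow_pow[OF aC] by simp
    then show ?thesis using fix_pow[OF nV z(1) z(4)] by simp
  qed
  obtain \<gamma> :: int where \<gamma>: "c = a [^] \<gamma>" using stab_elem[OF xV cfg(2,3)] unfolding a_def by blast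
  have Ac: "A j \<otimes> c = c \<otimes> A j" for j unfolding A_def \<gamma> using pow_comm[OF aC] by simp
  have cn: "(x, act c n) \<in> E" using act_E'[OF cfg(2) cfg(1)] cfg(3) by simp
  have nn: "n \<noteq> act c n" using cfg(4) by simp
  define \<beta> where "\<beta> = gen b"
  have \<beta>C: "\<beta> \<in> carrier G" unfolding \<beta>_def by (rule gen(1)[OF bV])
  obtain \<delta> where \<delta>: "\<forall>s\<in>S. graph_dist_le V E b (act s b) \<delta>"
  proof -
    have "\<exists>D. \<forall>s\<in>S. graph_dist_le V E b (act s b) D"
    proof (rule common_bound[OF S_fin])
      show "\<forall>s\<in>S. \<exists>d. graph_dist_le V E b (act s b) d"
        using conn_dist bV act_V S_sub by blast
      show "\<And>s d d'. graph_dist_le V E b (act s b) d \<Longrightarrow> d \<le> d' \<Longrightarrow> graph_dist_le V E b (act s b) d'"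
        by (rule dist_mono)
    qed
    then show ?thesis using that by blast
  qed
  define Wall where "Wall = {g \<in> carrier G. graph_dist_le V E (act g b) x \<delta>}"
  define Bx where "Bx = {y. graph_dist_le V E y x \<delta>}"
  have Bxfin: "finite Bx"
  proof -
    have "Bx \<subseteq> {y. graph_dist_le V E x y \<delta>}" unfolding Bx_def using dist_sym[OF symE] by blast
    then show ?thesis using ball_finite[OF xV] by (rule finite_subset)
  qed
  define Orb where "Orb = {act g b | g. g \<in> carrier G}"
  define Yw where "Yw = Bx \<inter> Orb"
  have Ywfin: "finite Yw" unfolding Yw_def using Bxfin by simp
  define hh where "hh y = (SOME h. h \<in> carrier G \<and> act h b = y)" for y
  have hh: "hh y \<in> carrier G \<and> act (hh y) b = y" if "y \<in> Orb" for y
  proof -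
    have "\<exists>h. h \<in> carrier G \<and> act h b = y" using that unfolding Orb_def by blast
    then show ?thesis unfolding hh_def by (rule someI_ex)
  qed
  have "\<forall>y\<in>Yw. \<exists>PQ::int\<times>int. fst PQ \<noteq> 0 \<and> snd PQ > 0 \<and> a [^] (fst PQ) = hh y \<otimes> \<beta> [^] (snd PQ) \<otimes> inv (hh y)"
  proof
    fix y assume "y \<in> Yw"
    then have "hh y \<in> carrier G" using hh unfolding Yw_def by blast
    then obtain P Q where "P \<noteq> 0 \<and> Q > 0 \<and> gen x [^] (P::int) = hh y \<otimes> gen b [^] (Q::int) \<otimes> inv (hh y)"
      using commens[OF xV bV] by blast
    then show "\<exists>PQ::int\<times>int. fst PQ \<noteq> 0 \<and> snd PQ > 0 \<and> a [^] (fst PQ) = hh y \<otimes> \<beta> [^] (snd PQ) \<otimes> inv (hh y)"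
      unfolding a_def \<beta>_def by (intro exI[of _ "(P, Q)"]) simp
  qed
  then obtain PQ :: "'v \<Rightarrow> int \<times> int" where PQ: "\<forall>y\<in>Yw. fst (PQ y) \<noteq> 0 \<and> snd (PQ y) > 0 \<and>
      a [^] (fst (PQ y)) = hh y \<otimes> \<beta> [^] (snd (PQ y)) \<otimes> inv (hh y)"
    by (rule bchoice[elim_format]) blast
  define PP where "PP y = fst (PQ y)" for y
  define QQ where "QQ y = snd (PQ y)" for y
  have PQy: "PP y \<noteq> 0" "QQ y > 0" "a [^] (PP y) = hh y \<otimes> \<beta> [^] (QQ y) \<otimes> inv (hh y)" if "y \<in> Yw" for y
    using PQ that unfolding PP_def QQ_def by auto
  define \<Lambda> where "\<Lambda> = (\<Sum>y\<in>Yw. nat (QQ y))"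
  have QQle: "QQ y \<le> int \<Lambda>" if "y \<in> Yw" for y
  proof -
    have "nat (QQ y) \<le> \<Lambda>" unfolding \<Lambda>_def using member_le_sum[of y Yw "\<lambda>y. nat (QQ y)"] Ywfin that by simp
    then show ?thesis using PQy(2)[OF that] by linarith
  qed
  have wall_dec: "\<exists>y\<in>Yw. \<exists>q::int. g = hh y \<otimes> \<beta> [^] q" if g: "g \<in> Wall" for g
  proof -
    have gC: "g \<in> carrier G" and gd: "graph_dist_le V E (act g b) x \<delta>" using g unfolding Wall_def by auto
    define y where "y = act g b"
    have yO: "y \<in> Orb" unfolding y_def Orb_def using gC by blast
    have yY: "y \<in> Yw" unfolding Yw_def Bx_def using yO gd y_def by simp
    have h: "hh y \<in> carrier G" "act (hh y) b = y" using hh[OF yO] by auto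
    have "act (inv (hh y) \<otimes> g) b = act (inv (hh y)) (act (hh y) b)" using act_mult h gC bV y_def by simp
    also have "\<dots> = b" by (rule act_inv1[OF h(1) bV])
    finally have f: "act (inv (hh y) \<otimes> g) b = b" .
    obtain q :: int where q: "inv (hh y) \<otimes> g = \<beta> [^] q" using stab_elem[OF bV _ f] h(1) gC unfolding \<beta>_def by auto
    have "hh y \<otimes> (inv (hh y) \<otimes> g) = g" using cancel2 h(1) gC by simp
    then have "g = hh y \<otimes> \<beta> [^] q" using q by simp
    then show ?thesis using yY by blast
  qed
  obtain K0 where K0: "\<forall>y\<in>Yw. inv (hh y) \<in> wball G S K0" "\<forall>\<rho>\<in>{0..<int \<Lambda>}. inv (\<beta> [^] \<rho>) \<in> wball G S K0"
  proof -
    define A1 where "A1 = (\<lambda>y. inv (hh y)) ` Yw \<union> (\<lambda>\<rho>. inv (\<beta> [^] \<rho>)) ` {0..<int \<Lambda>}"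
    have A1f: "finite A1" unfolding A1_def using Ywfin by simp
    have A1c: "A1 \<subseteq> carrier G" unfolding A1_def using hh \<beta>C unfolding Yw_def by auto
    have "\<exists>D. \<forall>g\<in>A1. g \<in> wball G S D"
    proof (rule common_bound[OF A1f])
      show "\<forall>g\<in>A1. \<exists>d. g \<in> wball G S d" using A1c carrier_wball by blast
      show "\<And>g d d'. g \<in> wball G S d \<Longrightarrow> d \<le> d' \<Longrightarrow> g \<in> wball G S d'" using wball_mono by blast
    qed
    then obtain D where "\<forall>g\<in>A1. g \<in> wball G S D" by blast
    then show ?thesis using that unfolding A1_def by blast
  qed
  show ?thesis
    unfolding extraterrestrial_graph_def
  proof (intro allI)
    fix m :: nat
    define P0 where "P0 = nat \<bar>p0\<bar>"
    define N0 where "N0 = m * \<Lambda> * (P0 + 1) + 1"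
    define Y where "Y = br x n \<inter> Orb - Bx"
    have Yinf: "infinite Y" unfolding Y_def Orb_def using cfg(6) Bxfin by (rule Diff_infinite_finite[rotated])
    have YV: "y \<in> V" if "y \<in> Y" for y using that br_V unfolding Y_def by blast
    obtain f where f: "\<forall>i<2*N0. f i \<in> Y" "\<forall>i<2*N0. \<forall>i'<2*N0. i \<noteq> i' \<longrightarrow> f i' \<notin> orbx x (f i)"
    proof -
      have "\<exists>f. (\<forall>i<2*N0. f i \<in> Y) \<and> (\<forall>i<2*N0. \<forall>i'<2*N0. i \<noteq> i' \<longrightarrow> f i' \<notin> orbx x (f i))"
      proof (rule select_distinct[OF Yinf])
        show "\<And>y. y \<in> Y \<Longrightarrow> finite (orbx x y)" using orbx_finite[OF xV] YV by blast
        show "\<And>y y'. y \<in> Y \<Longrightarrow> y' \<in> Y \<Longrightarrow> y' \<in> orbx x y \<Longrightarrow> y \<in> orbx x y'"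
          using orbx_sym[OF xV] YV by blast
      qed
      then show ?thesis using that by blast
    qed
    have fY: "f i \<in> br x n" "f i \<in> Orb" "f i \<notin> Bx" "f i \<in> V" if "i < 2*N0" for i
      using f(1) that YV unfolding Y_def by auto
    have hf: "hh (f i) \<in> carrier G" "act (hh (f i)) b = f i" if "i < 2*N0" for i
      using hh[OF fY(2)[OF that]] by auto
    define s where "s i = hh (f i)" for i
    define t where "t i = c \<otimes> hh (f (N0 + i))" for i
    have sC: "s i \<in> carrier G" if "i < N0" for i unfolding s_def using hf that by simp
    have tC: "t i \<in> carrier G" if "i < N0" for i unfolding t_def using hf that cfg(2) by simp
    have distinct: "i = i'" if g: "g1 \<in> carrier G" "g2 \<in> carrier G" "act g1 x = x" "act g2 x = x"
      and ii: "i < 2*N0" "i' < 2*N0" and eq: "act g1 (f i) = act g2 (f i')" for g1 g2 i i'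
    proof (rule ccontr)
      assume "i \<noteq> i'"
      have "act (inv g2 \<otimes> g1) (f i) = act (inv g2) (act g2 (f i'))" using act_mult g fY(4)[OF ii(1)] eq by simp
      also have "\<dots> = f i'" by (rule act_inv1[OF g(2) fY(4)[OF ii(2)]])
      finally have e: "act (inv g2 \<otimes> g1) (f i) = f i'" .
      have "act (inv g2 \<otimes> g1) x = act (inv g2) (act g2 x)" using act_mult g xV by simp
      also have "\<dots> = x" by (rule act_inv1[OF g(2) xV])
      finally have "act (inv g2 \<otimes> g1) x = x" .
      then have "f i' \<in> orbx x (f i)" using orbx_fix[OF xV fY(4)[OF ii(1)]] g e by (metis inv_closed m_closed)
      then show False using f(2) ii \<open>i \<noteq> i'\<close> by blast
    qed
    obtain k where k: "\<forall>i\<in>{..<N0}. graph_dist_le (carrier G) CE (s i) (t i) k"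
    proof -
      have "\<exists>D. \<forall>i\<in>{..<N0}. graph_dist_le (carrier G) CE (s i) (t i) D"
      proof (rule common_bound)
        show "\<forall>i\<in>{..<N0}. \<exists>d. graph_dist_le (carrier G) CE (s i) (t i) d" using cay_conn sC tC by blast
        show "\<And>i d d'. graph_dist_le (carrier G) CE (s i) (t i) d \<Longrightarrow> d \<le> d' \<Longrightarrow> graph_dist_le (carrier G) CE (s i) (t i) d'"
          by (rule dist_mono)
      qed simp
      then show ?thesis using that by blast
    qed
    obtain Ks where Ks: "\<forall>i\<in>{..<N0}. s i \<in> wball G S Ks"
    proof -
      have "\<exists>D. \<forall>i\<in>{..<N0}. s i \<in> wball G S D"
      proof (rule common_bound)
        show "\<forall>i\<in>{..<N0}. \<exists>d. s i \<in> wball G S d" using carrier_wball sC by blast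
        show "\<And>i d d'. s i \<in> wball G S d \<Longrightarrow> d \<le> d' \<Longrightarrow> s i \<in> wball G S d'" using wball_mono by blast
      qed simp
      then show ?thesis using that by blast
    qed
    show "\<exists>k. \<forall>r. \<exists>U F W \<mu>. U \<subseteq> carrier G \<and> F \<subseteq> carrier G \<and> W \<subseteq> carrier G \<and> finite U \<and> finite F \<and> finite W \<and>
       U \<inter> F = {} \<and> U \<inter> W = {} \<and> F \<inter> W = {} \<and> U \<noteq> {} \<and> m * card F \<le> card U \<and>
       bij_betw \<mu> U W \<and> (\<forall>u\<in>U. graph_dist_le (carrier G) CE u (\<mu> u) k) \<and>
       (\<forall>p. graph_walk (carrier G) CE p \<and> hd p \<in> U \<and> last p \<in> W \<longrightarrow> set p \<inter> F \<noteq> {} \<or> r \<le> length p - 1)"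
    proof (intro exI[of _ k] allI)
      fix r :: nat
      show "\<exists>U F W \<mu>. U \<subseteq> carrier G \<and> F \<subseteq> carrier G \<and> W \<subseteq> carrier G \<and> finite U \<and> finite F \<and> finite W \<and>
       U \<inter> F = {} \<and> U \<inter> W = {} \<and> F \<inter> W = {} \<and> U \<noteq> {} \<and> m * card F \<le> card U \<and>
       bij_betw \<mu> U W \<and> (\<forall>u\<in>U. graph_dist_le (carrier G) CE u (\<mu> u) k) \<and>
       (\<forall>p. graph_walk (carrier G) CE p \<and> hd p \<in> U \<and> last p \<in> W \<longrightarrow> set p \<inter> F \<noteq> {} \<or> r \<le> length p - 1)"
      proof -
        define R' where "R' = Ks + r + K0 + K0"
        have "finite ((\<lambda>e::int. a [^] e) -` wball G S R')"
        proof (rule finite_vimageI)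
          show "finite (wball G S R')" by (rule wball_finite)
          show "inj (\<lambda>e::int. a [^] e)" unfolding inj_def a_def using gen_inj[OF xV] by blast
        qed
        then obtain M where M: "M \<ge> 0" "\<forall>e\<in>(\<lambda>e::int. a [^] e) -` wball G S R'. \<bar>e\<bar> \<le> M"
          using finite_int_bound by blast
        have Mb: "\<bar>e\<bar> \<le> M" if "a [^] e \<in> wball G S R'" for e using M(2) that by simp
        define L :: nat where "L = nat M + 1"
        define D where "D = {-int L..int L} \<times> {..<N0}"
        define \<phi> where "\<phi> = (\<lambda>(j, i). A j \<otimes> s i)"
        define \<psi> where "\<psi> = (\<lambda>(j, i). A j \<otimes> t i)"
        define U where "U = \<phi> ` D"
        define W where "W = \<psi> ` D"
        define F where "F = {g \<in> Wall. \<exists>u\<in>U. graph_dist_le (carrier G) CE u g r}"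
        define \<mu> where "\<mu> = \<psi> \<circ> inv_into D \<phi>"
        have Dfin: "finite D" unfolding D_def by simp
        have actU: "act (\<phi> (j, i)) b = act (A j) (f i)" if "i < N0" for i j
          unfolding \<phi>_def s_def using act_mult AC hf[of i] that bV by simp
        have actW: "act (\<psi> (j, i)) b = act (A j \<otimes> c) (f (N0 + i))" if "i < N0" for i j
          unfolding \<psi>_def t_def using act_mult AC hf[of "N0 + i"] that bV cfg(2) fY(4)[of "N0 + i"]
          by (simp add: m_assoc)
        have Acx: "act (A j \<otimes> c) x = x" for j using act_mult AC cfg(2,3) Ax xV by simp
        have UC: "U \<subseteq> carrier G" unfolding U_def D_def \<phi>_def using AC sC by auto
        have WC: "W \<subseteq> carrier G" unfolding W_def D_def \<psi>_def using AC tC by auto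
        have FC: "F \<subseteq> carrier G" unfolding F_def Wall_def by auto
        have inj\<phi>: "inj_on \<phi> D"
        proof (rule inj_onI)
          fix d d' assume dd: "d \<in> D" "d' \<in> D" "\<phi> d = \<phi> d'"
          obtain j i where d: "d = (j, i)" by (cases d)
          obtain j' i' where d': "d' = (j', i')" by (cases d')
          have ii: "i < N0" "i' < N0" using dd(1,2) d d' unfolding D_def by auto
          have eq: "act (A j) (f i) = act (A j') (f i')" using actU[OF ii(1)] actU[OF ii(2)] dd(3) d d' by metis
          have "i = i'" using distinct[OF AC AC Ax Ax _ _ eq] ii by simp
          then have "A j \<otimes> s i = A j' \<otimes> s i" using dd(3) d d' unfolding \<phi>_def by simp
          then have "A j = A j'" using r_cancel AC sC ii(1) by blast
          then have "p0 * j = p0 * j'" unfolding A_def a_def using gen_inj[OF xV] by blast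
          then have "j = j'" using p00 by simp
          then show "d = d'" using d d' \<open>i = i'\<close> by simp
        qed
        have inj\<psi>: "inj_on \<psi> D"
        proof (rule inj_onI)
          fix d d' assume dd: "d \<in> D" "d' \<in> D" "\<psi> d = \<psi> d'"
          obtain j i where d: "d = (j, i)" by (cases d)
          obtain j' i' where d': "d' = (j', i')" by (cases d')
          have ii: "i < N0" "i' < N0" using dd(1,2) d d' unfolding D_def by auto
          have eq: "act (A j \<otimes> c) (f (N0 + i)) = act (A j' \<otimes> c) (f (N0 + i'))"
            using actW[OF ii(1)] actW[OF ii(2)] dd(3) d d' by metis
          have "N0 + i = N0 + i'"
            using distinct[OF m_closed[OF AC cfg(2)] m_closed[OF AC cfg(2)] Acx Acx _ _ eq] ii by simp
          then have "i = i'" by simp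
          then have "A j \<otimes> t i = A j' \<otimes> t i" using dd(3) d d' unfolding \<psi>_def by simp
          then have "A j = A j'" using r_cancel AC tC ii(1) by blast
          then have "p0 * j = p0 * j'" unfolding A_def a_def using gen_inj[OF xV] by blast
          then have "j = j'" using p00 by simp
          then show "d = d'" using d d' \<open>i = i'\<close> by simp
        qed
        have UW: "U \<inter> W = {}"
        proof (rule ccontr)
          assume "U \<inter> W \<noteq> {}"
          then obtain j i j' i' where ji: "(j, i) \<in> D" "(j', i') \<in> D" "\<phi> (j, i) = \<psi> (j', i')"
            unfolding U_def W_def by auto
          have ii: "i < N0" "i' < N0" using ji unfolding D_def by auto
          have eq: "act (A j) (f i) = act (A j' \<otimes> c) (f (N0 + i'))"
            using actU[OF ii(1)] actW[OF ii(2)] ji(3) by metis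
          have "i = N0 + i'"
            using distinct[OF AC m_closed[OF AC cfg(2)] Ax Acx _ _ eq] ii by simp
          then show False using ii by simp
        qed
        have farU: "u \<notin> Wall" if uU: "u \<in> U" for u
        proof
          assume uW: "u \<in> Wall"
          obtain j i where ji: "(j, i) \<in> D" "u = \<phi> (j, i)" using uU unfolding U_def by auto
          have ii: "i < N0" using ji unfolding D_def by auto
          have "graph_dist_le V E (act (A j) (f i)) (act (A j) x) \<delta>"
            using uW actU[OF ii] ji(2) Ax unfolding Wall_def by simp
          then have "graph_dist_le V E (f i) x \<delta>" using act_dist_iff[OF AC fY(4) xV] ii by simp
          then show False using fY(3)[of i] ii unfolding Bx_def by simp
        qed
        have farW: "w \<notin> Wall" if wW0: "w \<in> W" for w
        proof
          assume wW: "w \<in> Wall"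
          obtain j i where ji: "(j, i) \<in> D" "w = \<psi> (j, i)" using wW0 unfolding W_def by auto
          have ii: "i < N0" using ji unfolding D_def by auto
          have AcC: "A j \<otimes> c \<in> carrier G" using AC cfg(2) by simp
          have "graph_dist_le V E (act (A j \<otimes> c) (f (N0 + i))) (act (A j \<otimes> c) x) \<delta>"
            using wW actW[OF ii] ji(2) Acx unfolding Wall_def by simp
          then have "graph_dist_le V E (f (N0 + i)) x \<delta>" using act_dist_iff[OF AcC fY(4) xV] ii by simp
          then show False using fY(3)[of "N0 + i"] ii unfolding Bx_def by simp
        qed
        have UF: "U \<inter> F = {}" using farU unfolding F_def by blast
        have FW: "F \<inter> W = {}" using farW unfolding F_def by blast
        have Une: "U \<noteq> {}"
        proof -
          have "(0, 0) \<in> D" unfolding D_def N0_def by simp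
          then show ?thesis unfolding U_def by blast
        qed
        have cardU: "card U = (2 * L + 1) * N0"
        proof -
          have "card U = card D" unfolding U_def using card_image[OF inj\<phi>] .
          also have "\<dots> = card {-int L..int L} * card {..<N0}" unfolding D_def by (rule card_cartesian_product)
          also have "card {-int L..int L} = 2 * L + 1" by simp
          finally show ?thesis by simp
        qed
        define BB where "BB y = QQ y * (int P0 * int L + M + 1)" for y
        define FB where "FB = (\<Union>y\<in>Yw. (\<lambda>q. hh y \<otimes> \<beta> [^] q) ` {-BB y..BB y})"
        have FFB: "F \<subseteq> FB"
        proof
          fix g assume gF: "g \<in> F"
          then have gW: "g \<in> Wall" and gC: "g \<in> carrier G" unfolding F_def Wall_def by auto
          obtain u where uU: "u \<in> U" and ug: "graph_dist_le (carrier G) CE u g r" using gF unfolding F_def by blast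
          obtain y q where yY: "y \<in> Yw" and gq: "g = hh y \<otimes> \<beta> [^] (q::int)" using wall_dec[OF gW] by blast
          obtain j i where ji: "(j, i) \<in> D" "u = A j \<otimes> s i" using uU unfolding U_def \<phi>_def by auto
          have ii: "i < N0" and jL: "\<bar>j\<bar> \<le> int L" using ji unfolding D_def by auto
          have hC: "hh y \<in> carrier G" using hh yY unfolding Yw_def by blast
          define h where "h = hh y"
          define Q where "Q = QQ y"
          define P where "P = PP y"
          have Q0: "Q > 0" unfolding Q_def using PQy(2)[OF yY] .
          have P0': "P \<noteq> 0" unfolding P_def using PQy(1)[OF yY] .
          have aP: "a [^] P = h \<otimes> \<beta> [^] Q \<otimes> inv h" unfolding P_def Q_def h_def using PQy(3)[OF yY] .
          define tq where "tq = q div Q"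
          define \<rho> where "\<rho> = q mod Q"
          have \<rho>b: "0 \<le> \<rho>" "\<rho> < Q" unfolding \<rho>_def using Q0 by simp_all
          have qdec: "q = Q * tq + \<rho>" unfolding tq_def \<rho>_def by simp
          have \<rho>L: "\<rho> \<in> {0..<int \<Lambda>}" using \<rho>b QQle[OF yY] unfolding Q_def by simp
          have sC': "s i \<in> carrier G" using sC[OF ii] .
          have uC: "u \<in> carrier G" using ji(2) AC sC' by simp
          define w where "w = inv u \<otimes> g"
          have wr: "w \<in> wball G S r" unfolding w_def by (rule wball_of_cay_dist[OF ug])
          define Xq where "Xq = \<beta> [^] (Q * tq)"
          define Yr where "Yr = \<beta> [^] \<rho>"
          have XqC: "Xq \<in> carrier G" and YC: "Yr \<in> carrier G" unfolding Xq_def Yr_def using \<beta>C by simp_all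
          have hC': "h \<in> carrier G" unfolding h_def using hC .
          have e1: "a [^] (P * tq) = h \<otimes> Xq \<otimes> inv h"
          proof -
            have "a [^] (P * tq) = (a [^] P) [^] tq" using int_pow_pow[OF aC] by simp
            also have "\<dots> = h \<otimes> (\<beta> [^] Q) [^] tq \<otimes> inv h" unfolding aP using conj_pow[OF hC'] \<beta>C by simp
            also have "(\<beta> [^] Q) [^] tq = Xq" unfolding Xq_def using int_pow_pow[OF \<beta>C] by simp
            finally show ?thesis .
          qed
          have e2: "g = h \<otimes> Xq \<otimes> Yr"
          proof -
            have "\<beta> [^] q = Xq \<otimes> Yr" unfolding Xq_def Yr_def qdec using int_pow_mult[OF \<beta>C] by simp
            then show ?thesis using gq hC' XqC YC unfolding h_def by (simp add: m_assoc)
          qed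
          have e3: "s i \<otimes> w = inv (A j) \<otimes> g"
            unfolding w_def ji(2) using AC sC' gC by (simp add: inv_mult_group m_assoc cancel2)
          have e4: "s i \<otimes> w \<otimes> inv Yr \<otimes> inv h = a [^] (- (p0 * j) + P * tq)"
          proof -
            have "s i \<otimes> w \<otimes> inv Yr \<otimes> inv h = inv (A j) \<otimes> (h \<otimes> Xq \<otimes> Yr) \<otimes> inv Yr \<otimes> inv h"
              using e3 e2 by simp
            also have "\<dots> = inv (A j) \<otimes> (h \<otimes> Xq \<otimes> inv h)"
              using AC hC' XqC YC by (simp add: m_assoc cancel2)
            also have "\<dots> = inv (A j) \<otimes> a [^] (P * tq)" using e1 by simp
            also have "inv (A j) = a [^] (- (p0 * j))" unfolding A_def using int_pow_neg[OF aC] by simp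
            finally show ?thesis using int_pow_mult[OF aC, of "- (p0 * j)" "P * tq"] by simp
          qed
          have "s i \<otimes> w \<otimes> inv Yr \<otimes> inv h \<in> wball G S R'"
          proof -
            have m1: "s i \<in> wball G S Ks" using Ks ii by simp
            have m3: "inv Yr \<in> wball G S K0" using K0(2) \<rho>L unfolding Yr_def by blast
            have m4: "inv h \<in> wball G S K0" using K0(1) yY unfolding h_def by blast
            show ?thesis unfolding R'_def using wball_mult[OF wball_mult[OF wball_mult[OF m1 wr] m3] m4] .
          qed
          then have bnd: "\<bar>- (p0 * j) + P * tq\<bar> \<le> M" using Mb e4 by simp
          have "\<bar>p0 * j\<bar> \<le> int P0 * int L"
          proof -
            have "\<bar>p0 * j\<bar> = \<bar>p0\<bar> * \<bar>j\<bar>" by (rule abs_mult)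
            also have "\<dots> \<le> \<bar>p0\<bar> * int L" using jL by (simp add: mult_left_mono)
            finally show ?thesis unfolding P0_def by simp
          qed
          then have "\<bar>P * tq\<bar> \<le> int P0 * int L + M" using bnd by linarith
          moreover have "\<bar>tq\<bar> \<le> \<bar>P * tq\<bar>"
          proof -
            have "1 \<le> \<bar>P\<bar>" using P0' by linarith
            then have "1 * \<bar>tq\<bar> \<le> \<bar>P\<bar> * \<bar>tq\<bar>" by (rule mult_right_mono) simp
            then show ?thesis by (simp add: abs_mult)
          qed
          ultimately have tqb: "\<bar>tq\<bar> \<le> int P0 * int L + M" by linarith
          have "\<bar>q\<bar> \<le> Q * \<bar>tq\<bar> + \<rho>"
          proof -
            have "\<bar>q\<bar> \<le> \<bar>Q * tq\<bar> + \<bar>\<rho>\<bar>" unfolding qdec by (rule abs_triangle_ineq)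
            then show ?thesis using Q0 \<rho>b by (simp add: abs_mult)
          qed
          moreover have "Q * \<bar>tq\<bar> \<le> Q * (int P0 * int L + M)" using tqb Q0 by (simp add: mult_left_mono)
          ultimately have "\<bar>q\<bar> \<le> Q * (int P0 * int L + M + 1)" using \<rho>b by (simp add: algebra_simps)
          then have "q \<in> {-BB y..BB y}" unfolding BB_def Q_def by auto
          then show "g \<in> FB" unfolding FB_def using yY gq by blast
        qed
        have finFB: "finite FB" unfolding FB_def using Ywfin by simp
        have finF: "finite F" using finite_subset[OF FFB finFB] .
        have cardF: "card F \<le> \<Lambda> * (P0 + 1) * (2 * L + 1)"
        proof -
          have "card F \<le> card FB" by (rule card_mono[OF finFB FFB])
          also have "\<dots> \<le> (\<Sum>y\<in>Yw. card ((\<lambda>q. hh y \<otimes> \<beta> [^] q) ` {-BB y..BB y}))"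
            unfolding FB_def by (rule card_UN_le[OF Ywfin])
          also have "\<dots> \<le> (\<Sum>y\<in>Yw. nat (QQ y) * ((P0 + 1) * (2 * L + 1)))"
          proof (rule sum_mono)
            fix y assume yY: "y \<in> Yw"
            have "card ((\<lambda>q. hh y \<otimes> \<beta> [^] q) ` {-BB y..BB y}) \<le> card {-BB y..BB y}"
              by (rule card_image_le) simp
            also have "\<dots> = nat (2 * BB y + 1)" by simp
            also have "\<dots> \<le> nat (QQ y) * ((P0 + 1) * (2 * L + 1))"
            proof -
              have Qp: "QQ y > 0" using PQy(2)[OF yY] .
              have iL: "int L = M + 1" unfolding L_def using M(1) by simp
              have "1 * 1 \<le> QQ y * (int P0 + 1)" by (rule mult_mono) (use Qp in auto)
              then have "1 \<le> QQ y * (int P0 + 1)" by simp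
              moreover have "2 * BB y + 1 = 2 * (QQ y * (int P0 + 1) * (M + 1)) + 1"
                unfolding BB_def iL by (simp add: algebra_simps)
              moreover have "QQ y * ((int P0 + 1) * (2 * int L + 1)) = 2 * (QQ y * (int P0 + 1) * (M + 1)) + QQ y * (int P0 + 1)"
                unfolding iL by (simp add: algebra_simps)
              ultimately have "2 * BB y + 1 \<le> QQ y * ((int P0 + 1) * (2 * int L + 1))" by linarith
              moreover have "int (nat (QQ y) * ((P0 + 1) * (2 * L + 1))) = QQ y * ((int P0 + 1) * (2 * int L + 1))"
                using Qp by (simp add: algebra_simps)
              ultimately show ?thesis by linarith
            qed
            finally show "card ((\<lambda>q. hh y \<otimes> \<beta> [^] q) ` {-BB y..BB y}) \<le> nat (QQ y) * ((P0 + 1) * (2 * L + 1))" .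
          qed
          also have "\<dots> = \<Lambda> * ((P0 + 1) * (2 * L + 1))" unfolding \<Lambda>_def by (rule sum_distrib_right[symmetric])
          finally show ?thesis by (simp only: mult.assoc)
        qed
        have bij: "bij_betw \<mu> U W"
        proof -
          have b1: "bij_betw \<phi> D U" unfolding U_def using inj\<phi> by (simp add: bij_betw_def)
          have b2: "bij_betw \<psi> D W" unfolding W_def using inj\<psi> by (simp add: bij_betw_def)
          show ?thesis unfolding \<mu>_def using bij_betw_trans[OF bij_betw_inv_into[OF b1] b2] .
        qed
        have distk: "\<forall>u\<in>U. graph_dist_le (carrier G) CE u (\<mu> u) k"
        proof
          fix u assume "u \<in> U"
          then obtain j i where ji: "(j, i) \<in> D" "u = \<phi> (j, i)" unfolding U_def by auto
          have ii: "i < N0" using ji unfolding D_def by auto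
          have "\<mu> u = \<psi> (j, i)" unfolding \<mu>_def using ji inv_into_f_f[OF inj\<phi> ji(1)] by simp
          moreover have "graph_dist_le (carrier G) CE (A j \<otimes> s i) (A j \<otimes> t i) k"
            using cay_left[OF AC] k ii by simp
          ultimately show "graph_dist_le (carrier G) CE u (\<mu> u) k" using ji(2) unfolding \<phi>_def \<psi>_def by simp
        qed
        have brU: "act u b \<in> br x n" if uU: "u \<in> U" for u
        proof -
          obtain j i where ji: "(j, i) \<in> D" "u = \<phi> (j, i)" using uU unfolding U_def by auto
          have ii: "i < N0" using ji unfolding D_def by auto
          have "act (A j) (f i) \<in> br (act (A j) x) (act (A j) n)" using br_act[OF AC xV fY(1)] ii by simp
          then show ?thesis using actU[OF ii] ji(2) Ax An by simp
        qed
        have brW: "act w b \<in> br x (act c n)" if wW: "w \<in> W" for w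
        proof -
          obtain j i where ji: "(j, i) \<in> D" "w = \<psi> (j, i)" using wW unfolding W_def by auto
          have ii: "i < N0" using ji unfolding D_def by auto
          have AcC: "A j \<otimes> c \<in> carrier G" using AC cfg(2) by simp
          have "act (A j \<otimes> c) (f (N0 + i)) \<in> br (act (A j \<otimes> c) x) (act (A j \<otimes> c) n)"
            using br_act[OF AcC xV fY(1)] ii by simp
          moreover have "act (A j \<otimes> c) n = act c n"
          proof -
            have "act (A j \<otimes> c) n = act (c \<otimes> A j) n" using Ac by simp
            also have "\<dots> = act c (act (A j) n)" using act_mult cfg(2) AC nV by simp
            finally show ?thesis using An by simp
          qed
          ultimately show ?thesis using actW[OF ii] ji(2) Acx by simp
        qed
        have paths: "\<forall>p. graph_walk (carrier G) CE p \<and> hd p \<in> U \<and> last p \<in> W \<longrightarrow> set p \<inter> F \<noteq> {} \<or> r \<le> length p - 1"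
        proof (intro allI impI)
          fix p assume h: "graph_walk (carrier G) CE p \<and> hd p \<in> U \<and> last p \<in> W"
          have hw: "graph_walk (carrier G) CE p" and hU: "hd p \<in> U" and lW: "last p \<in> W" using h by auto
          show "set p \<inter> F \<noteq> {} \<or> r \<le> length p - 1"
          proof (rule ccontr)
            assume "\<not> (set p \<inter> F \<noteq> {} \<or> r \<le> length p - 1)"
            then have nF: "set p \<inter> F = {}" and sh: "length p - 1 \<le> r" by auto
            have avoid: "\<forall>g\<in>set p. \<not> graph_dist_le V E (act g b) x \<delta>"
            proof (intro ballI notI)
              fix g assume g: "g \<in> set p" and gd: "graph_dist_le V E (act g b) x \<delta>"
              have gC: "g \<in> carrier G" using walk_edges[OF hw] g by blast
              have "graph_dist_le (carrier G) CE (hd p) g r" by (rule walk_mem_dist[OF hw g sh])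
              then have "g \<in> F" unfolding F_def Wall_def using gC gd hU by blast
              then show False using nF g by blast
            qed
            obtain q where q: "graph_walk V E q" "hd q = act (hd p) b" "last q = act (last p) b" "x \<notin> set q"
              using crossing[OF bV xV \<delta> hw avoid] by blast
            have "x \<in> set q" by (rule br_sep[OF cfg(1) cn nn brU[OF hU] brW[OF lW] q(1,2,3)])
            then show False using q(4) by simp
          qed
        qed
        have "m * card F \<le> card U"
        proof -
          have "m * card F \<le> m * (\<Lambda> * (P0 + 1) * (2 * L + 1))" using cardF by simp
          also have "\<dots> = (m * \<Lambda> * (P0 + 1)) * (2 * L + 1)" by (simp only: mult.assoc)
          also have "\<dots> \<le> N0 * (2 * L + 1)" unfolding N0_def by simp
          finally show ?thesis using cardU by (simp add: mult.commute)
        qed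
        then show ?thesis
          using UC FC WC Dfin finF UF UW FW Une bij distk paths unfolding U_def W_def
          by (intro exI[of _ "\<phi> ` D"] exI[of _ F] exI[of _ "\<psi> ` D"] exI[of _ \<mu>]) simp
      qed
    qed
  qed
qed

end

theorem mainTheorem14:
  fixes G :: "('g, 'b) monoid_scheme"
    and V :: "'v set" and E :: "('v \<times> 'v) set" and act :: "'g \<Rightarrow> 'v \<Rightarrow> 'v"
  assumes "group G"
    and "GBS_action G V E act"
  shows "extraterrestrial_group G"
proof -
  interpret gbs G V E act using assms by (simp add: gbs_def)
  obtain S where S: "finite_symmetric_generating_set G S" using fin_gen by blast
  interpret gc G V E act S using assms S by (simp add: gc_def gbs_def cay_def cay_axioms_def)
  show ?thesis unfolding extraterrestrial_group_def using S main_et by blast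
qed

end
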